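(* In the setting described in the context (bad trader), the following hold: (i) $pnl=(\mathcal{Q}+J^sq+(1-J^s)Q)^{\theta}_{(0)}-(\mathcal{P}+P)^{\theta}_{(0)}-h-(1-J^e)(1-J^s_\theta)Q_\theta$; (ii) $\mathrm{HVA}=(J^s(q-Q))^{\theta}+D+J^eD'+va(K^\theta)$, where $D_t=\mathbb{E}_t[J^s_\theta Q_\theta]$, $D'_t=\mathbb{E}_t[(1-J^s_\theta)Q_\theta]$, and $va(K^\theta)_t=\mathcal{Q}_{t\wedge\theta}+Q_{t\wedge\theta}-\mathbb{E}_t[\mathcal{Q}_\theta+Q_\theta]$; (iii) $\mathrm{HVA}_0=q_0-\mathbb{E}_0[\mathcal{Q}_\theta]$; (iv) $-pnl+(\mathrm{HVA}-\mathrm{HVA}_0)=-(\mathcal{Q}+Q)^{\theta}_{(0)}+(\mathcal{P}+P)^{\theta}_{(0)}+h+(1-J^e)(1-J^s_\theta)Q_\theta+(D-D_0)+(J^eD'-J^e_0D'_0)+(va(K^\theta)-va(K^\theta)_0)$.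
   Context: Let $(\Omega,\mathcal{A},\mathbb{Q})$ be a probability space with a filtration $\mathfrak{F}=(\mathfrak{F}_t)_{0\le t\le T}$ satisfying the usual conditions; $\mathbb{E}_t$ is conditional expectation given $\mathfrak{F}_t$. All processes are adapted, càdlàg, and integrable enough for the conditional expectations to exist. For an integrable adapted process $X$, $va(X)_t=\mathbb{E}_t[X_T-X_t]$. A cash flow is an optional integrable process $\mathcal{Y}$ with $\mathcal{Y}_0=0$; its fair callable value is $\widetilde{va}(\mathcal{Y})_t=\sup_{\tau\in\mathcal{T}^t}\mathbb{E}_t[\mathcal{Y}_\tau-\mathcal{Y}_t]$, $\mathcal{T}^t$ the set of $[t,T]$-valued stopping times. Notation: $X_{(0)}=X-X_0$; $X^\theta$ is $X$ stopped at $\theta$. Data: a cash flow $\mathcal{Q}$ (promised on the callable asset) with $Q=\widetilde{va}(\mathcal{Q})$; $K$ is the drift of $\mathcal{Q}+Q$ (the unique nondecreasing integrable predictable process with $K_0=0$ such that $\mathcal{Q}+Q+K$ is a martingale on $[0,T]$); a hedging cash flow $\mathcal{P}$ (the bad trader's hedge, $\mathcal{P}^{bad}$) with fair value $P=va(\mathcal{P})$ (denoted $P^{bad}$); a semimartingale $q$ with $q_T=0$ (the trader's model price of the asset); a semimartingale $p$ (the trader's price of the hedge); a stopping time $\tau_s\in(0,T]$ (model switch time); an exit stopping time $\theta$; a martingale $h$ with $h=h^\theta$. Set $J^s=\mathbf{1}_{[0,\tau_s)}$, $J^e=\mathbf{1}_{[0,\theta)}$, $$pnl=(\mathcal{Q}+J^sq+(1-J^s)Q)^{\theta}_{(0)}-(\mathcal{P}+J^sp+(1-J^s)P)^{\theta}_{(0)}-h-(1-J^e)\big(J^s_\theta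 q_\theta+(1-J^s_\theta)Q_\theta\big),$$ and $\mathrm{HVA}=-va(pnl)$. Bad-trader assumptions: $\theta\le\tau_s$; $p_t=P_t$ for $t<\tau_s$ (continuous recalibration of the trader's model to the hedging instruments); and $J^s_\theta q_\theta=0$ (the trader calls optimally in his own model before $\tau_s$). *)

theory Defs
  imports "HOL-Probability.Probability"
begin

text \<open>Continuous-time setting on the horizon [0,Tm]. Processes are maps
  real => 'a => real; only times in [0,Tm] are relevant.
  Conditional expectation E_t is real_cond_exp M (F t).\<close>

definition usual_filtration :: "'a measure \<Rightarrow> (real \<Rightarrow> 'a measure) \<Rightarrow> real \<Rightarrow> bool" where
  "usual_filtration M F Tm \<longleftrightarrow>
     filtration (space M) F \<and> (\<forall>t. subalgebra M (F t)) \<and>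
     (\<forall>t\<in>{0..<Tm}. sets (F t) = (\<Inter>u\<in>{t<..Tm}. sets (F u))) \<and>
     (\<forall>A \<in> null_sets M. A \<in> sets (F 0))"

definition stopping_time_in :: "'a measure \<Rightarrow> (real \<Rightarrow> 'a measure) \<Rightarrow> real \<Rightarrow> real \<Rightarrow> ('a \<Rightarrow> real) \<Rightarrow> bool" where
  "stopping_time_in M F a b \<sigma> \<longleftrightarrow> stopping_time F \<sigma> \<and> (\<forall>\<omega>\<in>space M. \<sigma> \<omega> \<in> {a..b})"

definition adapted :: "(real \<Rightarrow> 'a measure) \<Rightarrow> real \<Rightarrow> (real \<Rightarrow> 'a \<Rightarrow> real) \<Rightarrow> bool" where
  "adapted F Tm X \<longleftrightarrow> (\<forall>t\<in>{0..Tm}. X t \<in> borel_measurable (F t))"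

definition cadlag :: "'a measure \<Rightarrow> real \<Rightarrow> (real \<Rightarrow> 'a \<Rightarrow> real) \<Rightarrow> bool" where
  "cadlag M Tm X \<longleftrightarrow> (\<forall>\<omega>\<in>space M.
      (\<forall>t\<in>{0..<Tm}. ((\<lambda>s. X s \<omega>) \<longlongrightarrow> X t \<omega>) (at_right t)) \<and>
      (\<forall>t\<in>{0<..Tm}. \<exists>l. ((\<lambda>s. X s \<omega>) \<longlongrightarrow> l) (at_left t)))"

definition stopped :: "(real \<Rightarrow> 'a \<Rightarrow> real) \<Rightarrow> ('a \<Rightarrow> real) \<Rightarrow> real \<Rightarrow> 'a \<Rightarrow> real" where
  "stopped X \<sigma> = (\<lambda>t \<omega>. X (min t (\<sigma> \<omega>)) \<omega>)"

definition from0 :: "(real \<Rightarrow> 'a \<Rightarrow> real) \<Rightarrow> real \<Rightarrow> 'a \<Rightarrow> real" where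
  "from0 X = (\<lambda>t \<omega>. X t \<omega> - X 0 \<omega>)"

definition va :: "'a measure \<Rightarrow> (real \<Rightarrow> 'a measure) \<Rightarrow> real \<Rightarrow> (real \<Rightarrow> 'a \<Rightarrow> real) \<Rightarrow> real \<Rightarrow> 'a \<Rightarrow> real" where
  "va M F Tm X = (\<lambda>t. real_cond_exp M (F t) (\<lambda>\<omega>. X Tm \<omega> - X t \<omega>))"

text \<open>Fair callable value: V_t is the essential supremum (over stopping times
  with values in [t,Tm]) of E_t[Y_tau - Y_t], stated via its defining
  properties (F_t-measurable a.s. upper bound, a.s. least among such).\<close>
definition callable_value :: "'a measure \<Rightarrow> (real \<Rightarrow> 'a measure) \<Rightarrow> real \<Rightarrow> (real \<Rightarrow> 'a \<Rightarrow> real) \<Rightarrow> (real \<Rightarrow> 'a \<Rightarrow> real) \<Rightarrow> bool" where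
  "callable_value M F Tm Y V \<longleftrightarrow> (\<forall>t\<in>{0..Tm}.
      V t \<in> borel_measurable (F t) \<and>
      (\<forall>\<tau>. stopping_time_in M F t Tm \<tau> \<longrightarrow>
          (AE \<omega> in M. real_cond_exp M (F t) (\<lambda>\<omega>. Y (\<tau> \<omega>) \<omega> - Y t \<omega>) \<omega> \<le> V t \<omega>)) \<and>
      (\<forall>Z \<in> borel_measurable (F t).
          (\<forall>\<tau>. stopping_time_in M F t Tm \<tau> \<longrightarrow>
             (AE \<omega> in M. real_cond_exp M (F t) (\<lambda>\<omega>. Y (\<tau> \<omega>) \<omega> - Y t \<omega>) \<omega> \<le> Z \<omega>))
          \<longrightarrow> (AE \<omega> in M. V t \<omega> \<le> Z \<omega>)))"

definition martingale :: "'a measure \<Rightarrow> (real \<Rightarrow> 'a measure) \<Rightarrow> real \<Rightarrow> (real \<Rightarrow> 'a \<Rightarrow> real) \<Rightarrow> bool" where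
  "martingale M F Tm X \<longleftrightarrow> adapted F Tm X \<and> (\<forall>t\<in>{0..Tm}. integrable M (X t)) \<and>
     (\<forall>s t. 0 \<le> s \<longrightarrow> s \<le> t \<longrightarrow> t \<le> Tm \<longrightarrow>
        (AE \<omega> in M. real_cond_exp M (F s) (X t) \<omega> = X s \<omega>))"

definition local_martingale :: "'a measure \<Rightarrow> (real \<Rightarrow> 'a measure) \<Rightarrow> real \<Rightarrow> (real \<Rightarrow> 'a \<Rightarrow> real) \<Rightarrow> bool" where
  "local_martingale M F Tm X \<longleftrightarrow> adapted F Tm X \<and> cadlag M Tm X \<and>
     (\<exists>\<sigma> :: nat \<Rightarrow> 'a \<Rightarrow> real. (\<forall>n. stopping_time_in M F 0 Tm (\<sigma> n)) \<and>
        (\<forall>n. \<forall>\<omega>\<in>space M. \<sigma> n \<omega> \<le> \<sigma> (Suc n) \<omega>) \<and>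
        (AE \<omega> in M. \<exists>n. \<sigma> n \<omega> = Tm) \<and>
        (\<forall>n. martingale M F Tm (stopped X (\<sigma> n))))"

definition finite_variation_on :: "(real \<Rightarrow> real) \<Rightarrow> real \<Rightarrow> real \<Rightarrow> bool" where
  "finite_variation_on f a b \<longleftrightarrow> (\<exists>B. \<forall>(n::nat) (s::nat \<Rightarrow> real).
      (\<forall>i\<le>n. s i \<in> {a..b}) \<longrightarrow> (\<forall>i<n. s i \<le> s (Suc i)) \<longrightarrow>
      (\<Sum>i<n. \<bar>f (s (Suc i)) - f (s i)\<bar>) \<le> B)"

definition semimartingale :: "'a measure \<Rightarrow> (real \<Rightarrow> 'a measure) \<Rightarrow> real \<Rightarrow> (real \<Rightarrow> 'a \<Rightarrow> real) \<Rightarrow> bool" where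
  "semimartingale M F Tm X \<longleftrightarrow> adapted F Tm X \<and> cadlag M Tm X \<and>
     (\<exists>L A. local_martingale M F Tm L \<and> (\<forall>\<omega>\<in>space M. L 0 \<omega> = 0) \<and>
        adapted F Tm A \<and> cadlag M Tm A \<and> (\<forall>\<omega>\<in>space M. A 0 \<omega> = 0) \<and>
        (\<forall>\<omega>\<in>space M. finite_variation_on (\<lambda>t. A t \<omega>) 0 Tm) \<and>
        (\<forall>t\<in>{0..Tm}. \<forall>\<omega>\<in>space M. X t \<omega> = X 0 \<omega> + L t \<omega> + A t \<omega>))"

definition predictable_sigma :: "'a measure \<Rightarrow> (real \<Rightarrow> 'a measure) \<Rightarrow> real \<Rightarrow> (real \<times> 'a) measure" where
  "predictable_sigma M F Tm = sigma ({0..Tm} \<times> space M)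
     ({{0} \<times> A | A. A \<in> sets (F 0)} \<union>
      {{s<..t} \<times> A | s t A. 0 \<le> s \<and> s < t \<and> t \<le> Tm \<and> A \<in> sets (F s)})"

definition predictable :: "'a measure \<Rightarrow> (real \<Rightarrow> 'a measure) \<Rightarrow> real \<Rightarrow> (real \<Rightarrow> 'a \<Rightarrow> real) \<Rightarrow> bool" where
  "predictable M F Tm X \<longleftrightarrow> (\<lambda>(t,\<omega>). X t \<omega>) \<in> borel_measurable (predictable_sigma M F Tm)"

definition is_drift :: "'a measure \<Rightarrow> (real \<Rightarrow> 'a measure) \<Rightarrow> real \<Rightarrow> (real \<Rightarrow> 'a \<Rightarrow> real) \<Rightarrow> (real \<Rightarrow> 'a \<Rightarrow> real) \<Rightarrow> bool" where
  "is_drift M F Tm Y K \<longleftrightarrow>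
     (\<forall>\<omega>\<in>space M. K 0 \<omega> = 0 \<and> mono_on {0..Tm} (\<lambda>t. K t \<omega>)) \<and>
     (\<forall>t\<in>{0..Tm}. integrable M (K t)) \<and> predictable M F Tm K \<and>
     martingale M F Tm (\<lambda>t \<omega>. Y t \<omega> + K t \<omega>)"

definition ind_before :: "('a \<Rightarrow> real) \<Rightarrow> real \<Rightarrow> 'a \<Rightarrow> real" where
  "ind_before \<sigma> = (\<lambda>t \<omega>. if t < \<sigma> \<omega> then 1 else 0)"

definition pnl :: "(real \<Rightarrow> 'a \<Rightarrow> real) \<Rightarrow> (real \<Rightarrow> 'a \<Rightarrow> real) \<Rightarrow> (real \<Rightarrow> 'a \<Rightarrow> real) \<Rightarrow>
   (real \<Rightarrow> 'a \<Rightarrow> real) \<Rightarrow> (real \<Rightarrow> 'a \<Rightarrow> real) \<Rightarrow> (real \<Rightarrow> 'a \<Rightarrow> real) \<Rightarrow>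
   ('a \<Rightarrow> real) \<Rightarrow> ('a \<Rightarrow> real) \<Rightarrow> (real \<Rightarrow> 'a \<Rightarrow> real) \<Rightarrow> real \<Rightarrow> 'a \<Rightarrow> real" where
  "pnl Qc Qv q Pc Pv p \<tau>s \<theta> h = (\<lambda>t \<omega>.
     from0 (stopped (\<lambda>s \<omega>. Qc s \<omega> + ind_before \<tau>s s \<omega> * q s \<omega> + (1 - ind_before \<tau>s s \<omega>) * Qv s \<omega>) \<theta>) t \<omega>
   - from0 (stopped (\<lambda>s \<omega>. Pc s \<omega> + ind_before \<tau>s s \<omega> * p s \<omega> + (1 - ind_before \<tau>s s \<omega>) * Pv s \<omega>) \<theta>) t \<omega>
   - h t \<omega>
   - (1 - ind_before \<theta> t \<omega>) * (ind_before \<tau>s (\<theta> \<omega>) \<omega> * q (\<theta> \<omega>) \<omega>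
                              + (1 - ind_before \<tau>s (\<theta> \<omega>) \<omega>) * Qv (\<theta> \<omega>) \<omega>))"

end

theory Submission
  imports Defs
begin

locale fs = prob_space M for M :: "'a measure" +
  fixes F :: "real \<Rightarrow> 'a measure"
  assumes filt: "filtration (space M) F" and sub: "\<And>t. subalgebra M (F t)"
begin

lemma sfs: "sigma_finite_subalgebra M (F t)"
  by (rule finite_measure_subalgebra_is_sigma_finite, unfold_locales) (rule sub)

lemma space_F[simp]: "space (F t) = space M" using filt by (simp add: filtration_def)
lemma sets_F_mono: "s \<le> t \<Longrightarrow> sets (F s) \<subseteq> sets (F t)" using filt by (simp add: filtration_def)
lemma meas_mono: "s \<le> t \<Longrightarrow> f \<in> borel_measurable (F s) \<Longrightarrow> f \<in> borel_measurable (F t)"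
  by (rule measurable_from_subalg[of "F t" "F s"]) (auto simp: subalgebra_def sets_F_mono)
lemma meas_M: "f \<in> borel_measurable (F s) \<Longrightarrow> f \<in> borel_measurable M"
  using measurable_from_subalg[OF sub] .
lemma sets_M: "A \<in> sets (F s) \<Longrightarrow> A \<in> sets M" using sub by (auto simp: subalgebra_def)

end

definition Kn :: "real \<Rightarrow> nat \<Rightarrow> real \<Rightarrow> nat" where "Kn b n x = nat \<lceil>x * 2^n / b\<rceil>"
definition gr :: "real \<Rightarrow> nat \<Rightarrow> nat \<Rightarrow> real" where "gr b n k = b * real k / 2^n"

lemma Kn_le: assumes "0 < b" "x \<le> b" shows "Kn b n x \<le> 2^n"
proof -
  have "x * 2^n / b \<le> 2^n" using assms by (simp add: field_simps)
  then have "\<lceil>x * 2^n / b\<rceil> \<le> 2^n"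
    by (metis ceiling_mono ceiling_of_int of_int_numeral of_int_power)
  then show ?thesis unfolding Kn_def by (simp add: nat_le_iff)
qed

lemma gr_Kn: assumes "0 < b" "0 \<le> x"
  shows "x \<le> gr b n (Kn b n x)" "gr b n (Kn b n x) < x + b/2^n"
proof -
  have y: "0 \<le> x * 2^n / b" using assms by simp
  have c1: "x * 2^n / b \<le> real (Kn b n x)"
  proof -
    have "0 \<le> \<lceil>x * 2^n / b\<rceil>" using y by simp
    then have "real (nat \<lceil>x * 2^n / b\<rceil>) = real_of_int \<lceil>x * 2^n / b\<rceil>" by simp
    then show ?thesis by (simp add: le_of_int_ceiling Kn_def)
  qed
  have c2: "real (Kn b n x) < x * 2^n / b + 1" unfolding Kn_def using y
    using ceiling_correct[of "x * 2^n / b"] by simp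
  have p: "(0::real) < 2^n" by simp
  show "x \<le> gr b n (Kn b n x)" using c1 assms p unfolding gr_def by (simp add: field_simps)
  show "gr b n (Kn b n x) < x + b/2^n" using c2 assms p unfolding gr_def by (simp add: field_simps)
qed

lemma gr_range: "0 < b \<Longrightarrow> k \<le> 2^n \<Longrightarrow> 0 \<le> gr b n k \<and> gr b n k \<le> b"
  unfolding gr_def by (auto simp: field_simps)

lemma Kn_eq_iff: assumes "0 < b" "0 \<le> x"
  shows "Kn b n x = k \<longleftrightarrow> (x \<le> gr b n k \<and> \<not> x \<le> gr b n k - b/2^n)"
proof -
  have y: "0 \<le> x * 2^n / b" using assms by simp
  have "Kn b n x = k \<longleftrightarrow> \<lceil>x * 2^n / b\<rceil> = int k" unfolding Kn_def using y by auto
  also have "\<dots> \<longleftrightarrow> real k - 1 < x * 2^n / b \<and> x * 2^n / b \<le> real k" by (simp add: ceiling_eq_iff)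
  also have "\<dots> \<longleftrightarrow> (x \<le> gr b n k \<and> \<not> x \<le> gr b n k - b/2^n)"
    using assms unfolding gr_def by (auto simp: field_simps)
  finally show ?thesis .
qed

lemma Kn_b: "0 < b \<Longrightarrow> gr b n (Kn b n b) = b"
  unfolding Kn_def gr_def by simp

lemma grid_conv:
  fixes f :: "real \<Rightarrow> real"
  assumes b: "0 < b" and x: "0 \<le> x" "x \<le> b"
    and rc: "x < b \<Longrightarrow> (f \<longlongrightarrow> f x) (at_right x)"
  shows "(\<lambda>n. f (gr b n (Kn b n x))) \<longlonglongrightarrow> f x"
proof (cases "x = b")
  case True
  then show ?thesis using Kn_b[OF b] by simp
next
  case False
  then have xb: "x < b" using x by simp
  show ?thesis
  proof (rule tendstoI)
    fix e :: real assume e: "0 < e"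
    from rc[OF xb] e have "eventually (\<lambda>s. dist (f s) (f x) < e) (at_right x)" by (rule tendstoD)
    then obtain d where d: "d > x" "\<And>y. y > x \<Longrightarrow> y < d \<Longrightarrow> dist (f y) (f x) < e"
      by (auto simp: eventually_at_right_field)
    have "(\<lambda>n. b / 2^n) \<longlonglongrightarrow> 0" by (rule LIMSEQ_divide_realpow_zero) simp
    from order_tendstoD(2)[OF this, of "d - x"] have "eventually (\<lambda>n. b/2^n < d - x) sequentially" using d(1) by simp
    then show "eventually (\<lambda>n. dist (f (gr b n (Kn b n x))) (f x) < e) sequentially"
    proof (rule eventually_mono)
      fix n assume n: "b/2^n < d - x"
      have g: "x \<le> gr b n (Kn b n x)" "gr b n (Kn b n x) < x + b/2^n" using gr_Kn[OF b x(1)] by auto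
      then consider "gr b n (Kn b n x) = x" | "gr b n (Kn b n x) > x \<and> gr b n (Kn b n x) < d" using n by linarith
      then show "dist (f (gr b n (Kn b n x))) (f x) < e" using d e by cases auto
    qed
  qed
qed

lemma intb: "integrable M f \<Longrightarrow> g \<in> borel_measurable M \<Longrightarrow> (\<And>x. x\<in>space M \<Longrightarrow> \<bar>g x\<bar> \<le> \<bar>f x :: real\<bar>) \<Longrightarrow> integrable M g"
  by (rule Bochner_Integration.integrable_bound[where f=f]) auto

lemma abs_int_le:
  fixes f g :: "'a \<Rightarrow> real"
  assumes "integrable M g" "\<And>x. x\<in>space M \<Longrightarrow> \<bar>f x\<bar> \<le> g x"
  shows "\<bar>\<integral>x. f x \<partial>M\<bar> \<le> (\<integral>x. g x \<partial>M)"
proof -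
  have "(\<integral>x. \<bar>f x\<bar> \<partial>M) \<le> (\<integral>x. g x \<partial>M)"
    by (rule integral_mono') (use assms in \<open>auto intro: order_trans[OF abs_ge_zero]\<close>)
  then show ?thesis using integral_abs_bound[of M f] by linarith
qed

definition clip :: "real \<Rightarrow> real \<Rightarrow> real" where "clip c x = max (-c) (min c x)"

lemma clip_abs: "0 \<le> c \<Longrightarrow> \<bar>clip c x\<bar> \<le> c" unfolding clip_def by auto
lemma clip_diff: "0 \<le> c \<Longrightarrow> \<bar>x - clip c x\<bar> \<le> (if c < \<bar>x\<bar> then \<bar>x\<bar> else 0)"
  unfolding clip_def by auto
lemma clip_meas[measurable]: "clip c \<in> borel_measurable borel" unfolding clip_def by measurable

lemma (in prob_space) ui_limit:
  fixes W Z :: "'a \<Rightarrow> real" and Wn :: "nat \<Rightarrow> 'a \<Rightarrow> real"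
  assumes Z: "integrable M Z" and W: "integrable M W"
    and Wn: "\<And>n. integrable M (Wn n)"
    and lim: "\<And>\<omega>. \<omega> \<in> space M \<Longrightarrow> (\<lambda>n. Wn n \<omega>) \<longlonglongrightarrow> W \<omega>"
    and B: "B \<in> sets M"
    and eqn: "\<And>n. (\<integral>\<omega>. indicator B \<omega> * Wn n \<omega> \<partial>M) = (\<integral>\<omega>. indicator B \<omega> * Z \<omega> \<partial>M)"
    and ui: "\<And>n c. 0 < c \<Longrightarrow> (\<integral>\<omega>. indicator {\<omega>\<in>space M. c < \<bar>Wn n \<omega>\<bar>} \<omega> * \<bar>Wn n \<omega>\<bar> \<partial>M)
               \<le> (\<integral>\<omega>. indicator {\<omega>\<in>space M. c < \<bar>Wn n \<omega>\<bar>} \<omega> * \<bar>Z \<omega>\<bar> \<partial>M)"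
    and l1: "\<And>n. (\<integral>\<omega>. \<bar>Wn n \<omega>\<bar> \<partial>M) \<le> (\<integral>\<omega>. \<bar>Z \<omega>\<bar> \<partial>M)"
  shows "(\<integral>\<omega>. indicator B \<omega> * W \<omega> \<partial>M) = (\<integral>\<omega>. indicator B \<omega> * Z \<omega> \<partial>M)"
proof -
  have [measurable]: "Z \<in> borel_measurable M" "W \<in> borel_measurable M" "Wn n \<in> borel_measurable M" "B \<in> sets M" for n
    using Z W Wn B by auto
  define a where "a = (\<integral>\<omega>. indicator B \<omega> * Z \<omega> \<partial>M)"
  define EZ where "EZ = (\<integral>\<omega>. \<bar>Z \<omega>\<bar> \<partial>M)"
  define G where "G c d = (\<integral>\<omega>. indicator {\<omega>\<in>space M. d < \<bar>Z \<omega>\<bar>} \<omega> * \<bar>Z \<omega>\<bar> \<partial>M) + d / c * EZ" for c d :: real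
  define H where "H c = (\<integral>\<omega>. \<bar>W \<omega> - clip c (W \<omega>)\<bar> \<partial>M)" for c
  have intclip: "integrable M (\<lambda>\<omega>. indicator B \<omega> * clip c (f \<omega>))" if "f \<in> borel_measurable M" "0 \<le> c" for f c
    by (rule integrable_const_bound[where B=c]) (use that clip_abs in \<open>auto simp: indicator_def\<close>)
  have step1: "\<bar>a - (\<integral>\<omega>. indicator B \<omega> * clip c (Wn n \<omega>) \<partial>M)\<bar> \<le> G c d" if c: "0 < c" and d: "0 < d" for c d n
  proof -
    define S where "S = {\<omega>\<in>space M. c < \<bar>Wn n \<omega>\<bar>}"
    have [measurable]: "S \<in> sets M" unfolding S_def by measurable
    have iB: "integrable M (\<lambda>\<omega>. indicator B \<omega> * Wn n \<omega>)"
      using integrable_real_mult_indicator[OF B Wn[of n]] by (simp add: mult.commute)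
    have "a - (\<integral>\<omega>. indicator B \<omega> * clip c (Wn n \<omega>) \<partial>M)
        = (\<integral>\<omega>. indicator B \<omega> * Wn n \<omega> - indicator B \<omega> * clip c (Wn n \<omega>) \<partial>M)"
      unfolding a_def eqn[of n, symmetric] using iB intclip[of "Wn n" c] c by simp
    also have "\<bar>\<dots>\<bar> \<le> (\<integral>\<omega>. indicator S \<omega> * \<bar>Wn n \<omega>\<bar> \<partial>M)"
    proof (rule abs_int_le)
      show "integrable M (\<lambda>\<omega>. indicator S \<omega> * \<bar>Wn n \<omega>\<bar>)"
        using integrable_real_mult_indicator[of S M "\<lambda>\<omega>. \<bar>Wn n \<omega>\<bar>"] Wn[of n] by (simp add: mult.commute)
      fix \<omega> assume \<omega>: "\<omega> \<in> space M"
      have "\<bar>Wn n \<omega> - clip c (Wn n \<omega>)\<bar> \<le> (if c < \<bar>Wn n \<omega>\<bar> then \<bar>Wn n \<omega>\<bar> else 0)"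
        using clip_diff c by simp
      then show "\<bar>indicator B \<omega> * Wn n \<omega> - indicator B \<omega> * clip c (Wn n \<omega>)\<bar> \<le> indicator S \<omega> * \<bar>Wn n \<omega>\<bar>"
        using \<omega> unfolding S_def by (auto simp: indicator_def split: if_splits)
    qed
    also have "\<dots> \<le> (\<integral>\<omega>. indicator S \<omega> * \<bar>Z \<omega>\<bar> \<partial>M)" unfolding S_def using ui c by simp
    also have "\<dots> \<le> (\<integral>\<omega>. indicator {\<omega>\<in>space M. d < \<bar>Z \<omega>\<bar>} \<omega> * \<bar>Z \<omega>\<bar> + d * indicator S \<omega> \<partial>M)"
    proof (rule integral_mono')
      show "integrable M (\<lambda>\<omega>. indicator {\<omega>\<in>space M. d < \<bar>Z \<omega>\<bar>} \<omega> * \<bar>Z \<omega>\<bar> + d * indicator S \<omega>)"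
      proof (intro Bochner_Integration.integrable_add)
        show "integrable M (\<lambda>\<omega>. indicator {\<omega>\<in>space M. d < \<bar>Z \<omega>\<bar>} \<omega> * \<bar>Z \<omega>\<bar>)"
          using integrable_real_mult_indicator[of "{\<omega>\<in>space M. d < \<bar>Z \<omega>\<bar>}" M "\<lambda>\<omega>. \<bar>Z \<omega>\<bar>"] Z
          by (auto simp: mult.commute)
        show "integrable M (\<lambda>\<omega>. d * indicator S \<omega>)"
          by (rule integrable_const_bound[where B=d]) (use d in \<open>auto simp: indicator_def\<close>)
      qed
    next
      fix \<omega> assume "\<omega> \<in> space M"
      show "0 \<le> indicator {\<omega>\<in>space M. d < \<bar>Z \<omega>\<bar>} \<omega> * \<bar>Z \<omega>\<bar> + d * indicator S \<omega>"
        using d by (simp add: indicator_def)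
      have "indicator S \<omega> * \<bar>Z \<omega>\<bar> \<le> indicator {\<omega>\<in>space M. d < \<bar>Z \<omega>\<bar>} \<omega> * \<bar>Z \<omega>\<bar> + d * indicator S \<omega>"
        using d \<open>\<omega> \<in> space M\<close> unfolding indicator_def by (cases "d < \<bar>Z \<omega>\<bar>"; cases "\<omega> \<in> S") auto
      then show "indicator S \<omega> * \<bar>Z \<omega>\<bar> \<le> indicator {\<omega>\<in>space M. d < \<bar>Z \<omega>\<bar>} \<omega> * \<bar>Z \<omega>\<bar> + d * indicator S \<omega>" .
    qed
    also have "\<dots> = (\<integral>\<omega>. indicator {\<omega>\<in>space M. d < \<bar>Z \<omega>\<bar>} \<omega> * \<bar>Z \<omega>\<bar> \<partial>M) + d * (\<integral>\<omega>. indicator S \<omega> \<partial>M)"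
    proof (rule Bochner_Integration.integral_add[THEN trans])
      show "integrable M (\<lambda>\<omega>. indicator {\<omega>\<in>space M. d < \<bar>Z \<omega>\<bar>} \<omega> * \<bar>Z \<omega>\<bar>)"
        using integrable_real_mult_indicator[of "{\<omega>\<in>space M. d < \<bar>Z \<omega>\<bar>}" M "\<lambda>\<omega>. \<bar>Z \<omega>\<bar>"] Z
        by (auto simp: mult.commute)
      show "integrable M (\<lambda>\<omega>. d * indicator S \<omega>)"
        by (rule integrable_const_bound[where B=d]) (use d in \<open>auto simp: indicator_def\<close>)
    qed simp
    also have "d * (\<integral>\<omega>. indicator S \<omega> \<partial>M) \<le> d / c * EZ"
    proof -
      have "c * (\<integral>\<omega>. indicator S \<omega> \<partial>M) = (\<integral>\<omega>. c * indicator S \<omega> \<partial>M)" by simp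
      also have "\<dots> \<le> (\<integral>\<omega>. \<bar>Wn n \<omega>\<bar> \<partial>M)"
        by (rule integral_mono') (use Wn[of n] in \<open>auto simp: S_def indicator_def\<close>)
      also have "\<dots> \<le> EZ" unfolding EZ_def by (rule l1)
      finally have "c * (\<integral>\<omega>. indicator S \<omega> \<partial>M) \<le> EZ" .
      then have "(\<integral>\<omega>. indicator S \<omega> \<partial>M) \<le> EZ / c" using c by (simp add: field_simps)
      from mult_left_mono[OF this, of d] d show ?thesis by simp
    qed
    finally show ?thesis unfolding G_def by simp
  qed
  have step2: "\<bar>a - (\<integral>\<omega>. indicator B \<omega> * clip c (W \<omega>) \<partial>M)\<bar> \<le> G c d" if c: "0 < c" and d: "0 < d" for c d
  proof -
    have "(\<lambda>n. (\<integral>\<omega>. indicator B \<omega> * clip c (Wn n \<omega>) \<partial>M)) \<longlonglongrightarrow> (\<integral>\<omega>. indicator B \<omega> * clip c (W \<omega>) \<partial>M)"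
    proof (rule integral_dominated_convergence[where w="\<lambda>_. c"])
      show "AE x in M. (\<lambda>n. indicator B x * clip c (Wn n x)) \<longlonglongrightarrow> indicator B x * clip c (W x)"
      proof (rule AE_I2)
        fix x assume "x \<in> space M"
        have "isCont (clip c) (W x)" unfolding clip_def by (intro continuous_intros)
        then have "(\<lambda>n. clip c (Wn n x)) \<longlonglongrightarrow> clip c (W x)"
          using lim[OF \<open>x \<in> space M\<close>] by (rule isCont_tendsto_compose)
        then show "(\<lambda>n. indicator B x * clip c (Wn n x)) \<longlonglongrightarrow> indicator B x * clip c (W x)"
          by (intro tendsto_intros)
      qed
      show "AE x in M. norm (indicator B x * clip c (Wn n x)) \<le> c" for n
        using clip_abs[of c] c by (auto simp: indicator_def)
      show "(\<lambda>x. indicator B x * clip c (W x)) \<in> borel_measurable M" by measurable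
      show "(\<lambda>x. indicator B x * clip c (Wn n x)) \<in> borel_measurable M" for n by measurable
    qed simp
    then have "(\<lambda>n. \<bar>a - (\<integral>\<omega>. indicator B \<omega> * clip c (Wn n \<omega>) \<partial>M)\<bar>) \<longlonglongrightarrow> \<bar>a - (\<integral>\<omega>. indicator B \<omega> * clip c (W \<omega>) \<partial>M)\<bar>"
      by (intro tendsto_intros)
    then show ?thesis by (rule LIMSEQ_le_const2) (use step1[OF c d] in auto)
  qed
  have step3: "\<bar>(\<integral>\<omega>. indicator B \<omega> * clip c (W \<omega>) \<partial>M) - (\<integral>\<omega>. indicator B \<omega> * W \<omega> \<partial>M)\<bar> \<le> H c" if c: "0 < c" for c
  proof -
    have iB: "integrable M (\<lambda>\<omega>. indicator B \<omega> * W \<omega>)"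
      using integrable_real_mult_indicator[OF B W] by (simp add: mult.commute)
    have "(\<integral>\<omega>. indicator B \<omega> * clip c (W \<omega>) \<partial>M) - (\<integral>\<omega>. indicator B \<omega> * W \<omega> \<partial>M)
      = (\<integral>\<omega>. indicator B \<omega> * clip c (W \<omega>) - indicator B \<omega> * W \<omega> \<partial>M)"
      using iB intclip[of W c] c by simp
    also have "\<bar>\<dots>\<bar> \<le> H c" unfolding H_def
    proof (rule abs_int_le)
      have "integrable M (\<lambda>\<omega>. W \<omega> - clip c (W \<omega>))"
        using W intclip[of W c] c integrable_const_bound[of "\<lambda>\<omega>. clip c (W \<omega>)" c] clip_abs[of c] by auto
      then show "integrable M (\<lambda>\<omega>. \<bar>W \<omega> - clip c (W \<omega>)\<bar>)" by auto
    qed (auto simp: indicator_def abs_minus_commute)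
    finally show ?thesis .
  qed
  define u where "u m = G (real (Suc m)^2) (real (Suc m)) + H (real (Suc m)^2)" for m
  have bnd: "\<bar>a - (\<integral>\<omega>. indicator B \<omega> * W \<omega> \<partial>M)\<bar> \<le> u m" for m
    using step2[of "real (Suc m)^2" "real (Suc m)"] step3[of "real (Suc m)^2"] unfolding u_def by simp
  have "u \<longlonglongrightarrow> 0 + 0 * EZ + 0"
  proof -
    have l1: "(\<lambda>m. (\<integral>\<omega>. indicator {\<omega>\<in>space M. real (Suc m) < \<bar>Z \<omega>\<bar>} \<omega> * \<bar>Z \<omega>\<bar> \<partial>M)) \<longlonglongrightarrow> (\<integral>\<omega>. 0 \<partial>M)"
    proof (rule integral_dominated_convergence[where w="\<lambda>\<omega>. \<bar>Z \<omega>\<bar>"])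
      show "AE x in M. (\<lambda>m. indicator {\<omega>\<in>space M. real (Suc m) < \<bar>Z \<omega>\<bar>} x * \<bar>Z x\<bar>) \<longlonglongrightarrow> 0"
      proof (rule AE_I2, rule tendsto_eventually)
        fix x
        show "eventually (\<lambda>m. indicator {\<omega>\<in>space M. real (Suc m) < \<bar>Z \<omega>\<bar>} x * \<bar>Z x\<bar> = 0) sequentially"
          unfolding eventually_sequentially
        proof (intro exI allI impI)
          fix m assume m: "nat \<lceil>\<bar>Z x\<bar>\<rceil> \<le> m"
          have "\<bar>Z x\<bar> \<le> of_int \<lceil>\<bar>Z x\<bar>\<rceil>" by (rule le_of_int_ceiling)
          also have "\<dots> = real (nat \<lceil>\<bar>Z x\<bar>\<rceil>)" by simp
          also have "\<dots> \<le> real (Suc m)" using m by (simp only: of_nat_le_iff le_SucI)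
          finally have "\<bar>Z x\<bar> \<le> real (Suc m)" .
          then show "indicator {\<omega>\<in>space M. real (Suc m) < \<bar>Z \<omega>\<bar>} x * \<bar>Z x\<bar> = 0" by (auto simp: indicator_def)
        qed
      qed
    qed (use Z in \<open>auto simp: indicator_def\<close>)
    have l2: "(\<lambda>m. real (Suc m) / real (Suc m)^2) \<longlonglongrightarrow> 0"
    proof -
      have "(\<lambda>m. 1 / real (Suc m)) \<longlonglongrightarrow> 0" by (rule LIMSEQ_Suc[OF lim_const_over_n]) 
      then show ?thesis by (simp add: power2_eq_square)
    qed
    have l3: "(\<lambda>m. H (real (Suc m)^2)) \<longlonglongrightarrow> (\<integral>\<omega>. 0 \<partial>M)" unfolding H_def
    proof (rule integral_dominated_convergence[where w="\<lambda>\<omega>. \<bar>W \<omega>\<bar>"])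
      show "AE x in M. (\<lambda>m. \<bar>W x - clip (real (Suc m)^2) (W x)\<bar>) \<longlonglongrightarrow> 0"
      proof (rule AE_I2, rule tendsto_eventually)
        fix x
        show "eventually (\<lambda>m. \<bar>W x - clip (real (Suc m)^2) (W x)\<bar> = 0) sequentially"
          unfolding eventually_sequentially
        proof (intro exI allI impI)
          fix m assume m: "nat \<lceil>\<bar>W x\<bar>\<rceil> \<le> m"
          have "\<bar>W x\<bar> \<le> of_int \<lceil>\<bar>W x\<bar>\<rceil>" by (rule le_of_int_ceiling)
          also have "\<dots> = real (nat \<lceil>\<bar>W x\<bar>\<rceil>)" by simp
          also have "\<dots> \<le> real (Suc m)" using m by (simp only: of_nat_le_iff le_SucI)
          finally have "\<bar>W x\<bar> \<le> real (Suc m)" .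
          also have "\<dots> \<le> real (Suc m)^2" by (simp add: power2_eq_square)
          finally show "\<bar>W x - clip (real (Suc m)^2) (W x)\<bar> = 0" unfolding clip_def by auto
        qed
      qed
      show "AE x in M. norm \<bar>W x - clip (real (Suc m)^2) (W x)\<bar> \<le> \<bar>W x\<bar>" for m
      proof (rule AE_I2)
        fix x
        have "\<bar>W x - clip (real (Suc m)^2) (W x)\<bar> \<le> (if real (Suc m)^2 < \<bar>W x\<bar> then \<bar>W x\<bar> else 0)"
          by (rule clip_diff) simp
        then show "norm \<bar>W x - clip (real (Suc m)^2) (W x)\<bar> \<le> \<bar>W x\<bar>" by (auto split: if_splits)
      qed
    qed (use W in auto)
    show ?thesis unfolding u_def G_def
      using l1 l3 tendsto_mult[OF l2 tendsto_const[of EZ]] by (intro tendsto_add) auto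
  qed
  then have "u \<longlonglongrightarrow> 0" by simp
  then have "\<bar>a - (\<integral>\<omega>. indicator B \<omega> * W \<omega> \<partial>M)\<bar> \<le> 0"
    by (rule LIMSEQ_le_const) (use bnd in \<open>auto\<close>)
  then show ?thesis unfolding a_def by simp
qed

lemma sumrep:
  fixes f :: "nat \<Rightarrow> real"
  assumes "Kn b n (\<rho> \<omega>) \<le> 2^n"
  shows "(\<Sum>k\<le>2^n. indicator (B \<inter> {\<omega>\<in>S. Kn b n (\<rho> \<omega>) = k}) \<omega> * f k) = indicator (B \<inter> S) \<omega> * f (Kn b n (\<rho> \<omega>))"
proof -
  have "(\<Sum>k\<le>2^n. indicator (B \<inter> {\<omega>\<in>S. Kn b n (\<rho> \<omega>) = k}) \<omega> * f k)
      = (\<Sum>k\<le>2^n. if k = Kn b n (\<rho> \<omega>) then indicator (B \<inter> S) \<omega> * f k else 0)"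
    by (intro sum.cong) (auto simp: indicator_def)
  also have "\<dots> = indicator (B \<inter> S) \<omega> * f (Kn b n (\<rho> \<omega>))" using assms by simp
  finally show ?thesis .
qed

context fs begin

definition mgc :: "real \<Rightarrow> (real \<Rightarrow> 'a \<Rightarrow> real) \<Rightarrow> ('a \<Rightarrow> real) \<Rightarrow> bool" where
  "mgc Tm Y Z \<longleftrightarrow> integrable M Z \<and> (\<forall>t\<in>{0..Tm}. Y t \<in> borel_measurable (F t) \<and> integrable M (Y t) \<and>
     (\<forall>A\<in>sets (F t). (\<integral>x. indicator A x * Y t x \<partial>M) = (\<integral>x. indicator A x * Z x \<partial>M)))"

lemma stopped_sets: "stopping_time F \<rho> \<Longrightarrow> {\<omega>\<in>space M. \<rho> \<omega> \<le> v} \<in> sets (F v)"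
  using stopping_timeD[of F \<rho> v] by (simp add: pred_def)

lemma stopped_sets2: "stopping_time F \<rho> \<Longrightarrow> {\<omega>\<in>space M. v < \<rho> \<omega>} \<in> sets (F v)"
  using stopping_timeD2[of F \<rho> v] by (simp add: pred_def)

lemma Cmeas:
  assumes b: "0 < b" and rng: "\<forall>\<omega>\<in>space M. 0 \<le> \<rho> \<omega>"
    and B: "B \<subseteq> space M" "\<And>v. {\<omega>\<in>B. \<rho> \<omega> \<le> v} \<in> sets (F v)"
  shows "B \<inter> {\<omega>\<in>space M. Kn b n (\<rho> \<omega>) = k} \<in> sets (F (gr b n k))"
proof -
  have "B \<inter> {\<omega>\<in>space M. Kn b n (\<rho> \<omega>) = k} = {\<omega>\<in>B. \<rho> \<omega> \<le> gr b n k} - {\<omega>\<in>B. \<rho> \<omega> \<le> gr b n k - b/2^n}"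
  proof -
    have iff: "\<And>\<omega>. \<omega> \<in> space M \<Longrightarrow> Kn b n (\<rho> \<omega>) = k \<longleftrightarrow> (\<rho> \<omega> \<le> gr b n k \<and> \<not> \<rho> \<omega> \<le> gr b n k - b/2^n)"
      using Kn_eq_iff[OF b] rng by blast
    show ?thesis using B(1) iff by blast
  qed
  moreover have "{\<omega>\<in>B. \<rho> \<omega> \<le> gr b n k - b/2^n} \<in> sets (F (gr b n k))"
    using B(2)[of "gr b n k - b/2^n"] sets_F_mono[of "gr b n k - b/2^n" "gr b n k"] b by auto
  ultimately show ?thesis using B(2)[of "gr b n k"] by auto
qed

lemma Cmeas_space:
  assumes b: "0 < b" and st: "stopping_time F \<rho>" and rng: "\<forall>\<omega>\<in>space M. 0 \<le> \<rho> \<omega>"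
  shows "{\<omega>\<in>space M. Kn b n (\<rho> \<omega>) = k} \<in> sets (F (gr b n k))"
  using Cmeas[OF b rng, of "space M" n k] stopped_sets[OF st] by (simp add: Int_absorb1)

lemma absbound:
  assumes mg: "mgc Tm Y Z" and v: "v \<in> {0..Tm}" and A: "A \<in> sets (F v)"
  shows "(\<integral>x. indicator A x * \<bar>Y v x\<bar> \<partial>M) \<le> (\<integral>x. indicator A x * \<bar>Z x\<bar> \<partial>M)"
proof -
  have Ym[measurable]: "Y v \<in> borel_measurable (F v)" and Yi: "integrable M (Y v)" and Zi: "integrable M Z"
    and eq: "\<And>A. A \<in> sets (F v) \<Longrightarrow> (\<integral>x. indicator A x * Y v x \<partial>M) = (\<integral>x. indicator A x * Z x \<partial>M)"
    using mg v unfolding mgc_def by auto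
  define Ap where "Ap = A \<inter> {x\<in>space M. 0 \<le> Y v x}"
  define Am where "Am = A \<inter> {x\<in>space M. Y v x < 0}"
  have "{x\<in>space (F v). 0 \<le> Y v x} \<in> sets (F v)" "{x\<in>space (F v). Y v x < 0} \<in> sets (F v)" by measurable
  then have ApF: "Ap \<in> sets (F v)" and AmF: "Am \<in> sets (F v)" using A unfolding Ap_def Am_def by auto
  have ApM: "Ap \<in> sets M" and AmM: "Am \<in> sets M" using ApF AmF sets_M by auto
  have AM: "A \<in> sets M" using A sets_M by auto
  have iY: "integrable M (\<lambda>x. indicator S x * Y v x)" if "S \<in> sets M" for S
    using integrable_real_mult_indicator[OF that Yi] by (simp add: mult.commute)
  have iZ: "integrable M (\<lambda>x. indicator S x * Z x)" if "S \<in> sets M" for S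
    using integrable_real_mult_indicator[OF that Zi] by (simp add: mult.commute)
  have iaZ: "integrable M (\<lambda>x. indicator S x * \<bar>Z x\<bar>)" if "S \<in> sets M" for S
    using integrable_real_mult_indicator[OF that integrable_abs[OF Zi]] by (simp add: mult.commute)
  have "(\<integral>x. indicator A x * \<bar>Y v x\<bar> \<partial>M) = (\<integral>x. indicator Ap x * Y v x - indicator Am x * Y v x \<partial>M)"
    unfolding Ap_def Am_def
    by (rule Bochner_Integration.integral_cong[OF refl]) (use sets.sets_into_space[OF AM] in \<open>auto simp: indicator_def\<close>)
  also have "\<dots> = (\<integral>x. indicator Ap x * Y v x \<partial>M) - (\<integral>x. indicator Am x * Y v x \<partial>M)"
    using iY[OF ApM] iY[OF AmM] by simp
  also have "\<dots> = (\<integral>x. indicator Ap x * Z x \<partial>M) - (\<integral>x. indicator Am x * Z x \<partial>M)"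
    using eq[OF ApF] eq[OF AmF] by simp
  also have "\<dots> = (\<integral>x. indicator Ap x * Z x - indicator Am x * Z x \<partial>M)"
    using iZ[OF ApM] iZ[OF AmM] by simp
  also have "\<dots> \<le> (\<integral>x. indicator A x * \<bar>Z x\<bar> \<partial>M)"
  proof (rule integral_mono)
    show "integrable M (\<lambda>x. indicator Ap x * Z x - indicator Am x * Z x)"
      using iZ[OF ApM] iZ[OF AmM] by simp
    show "integrable M (\<lambda>x. indicator A x * \<bar>Z x\<bar>)" by (rule iaZ[OF AM])
    fix x assume "x \<in> space M"
    show "indicator Ap x * Z x - indicator Am x * Z x \<le> indicator A x * \<bar>Z x\<bar>"
      unfolding Ap_def Am_def by (auto simp: indicator_def)
  qed
  finally show ?thesis .
qed

lemma disc_meas: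
  fixes Y :: "real \<Rightarrow> 'a \<Rightarrow> real"
  assumes b: "0 < b" and st: "stopping_time F \<rho>" and rng: "\<forall>\<omega>\<in>space M. 0 \<le> \<rho> \<omega> \<and> \<rho> \<omega> \<le> b"
    and Ym: "\<And>k. k \<le> 2^n \<Longrightarrow> Y (gr b n k) \<in> borel_measurable (F (gr b n k))"
  shows "(\<lambda>\<omega>. Y (gr b n (Kn b n (\<rho> \<omega>))) \<omega>) \<in> borel_measurable (F b)"
proof -
  have eq: "Y (gr b n (Kn b n (\<rho> \<omega>))) \<omega> = (\<Sum>k\<le>2^n. indicator (space M \<inter> {\<omega>\<in>space M. Kn b n (\<rho> \<omega>) = k}) \<omega> * Y (gr b n k) \<omega>)"
    if "\<omega> \<in> space (F b)" for \<omega>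
    using that sumrep[of b n \<rho> \<omega> "space M" "space M" "\<lambda>k. Y (gr b n k) \<omega>"] Kn_le[OF b] rng by simp
  have "(\<lambda>\<omega>. \<Sum>k\<le>2^n. indicator (space M \<inter> {\<omega>\<in>space M. Kn b n (\<rho> \<omega>) = k}) \<omega> * Y (gr b n k) \<omega>) \<in> borel_measurable (F b)"
  proof (intro borel_measurable_sum borel_measurable_times)
    fix k assume "k \<in> {..2^n::nat}"
    then have k: "k \<le> 2^n" by simp
    have g: "gr b n k \<le> b" using gr_range[OF b k] by simp
    have "{\<omega>\<in>space M. Kn b n (\<rho> \<omega>) = k} \<in> sets (F b)"
      using Cmeas_space[OF b st] rng sets_F_mono[OF g] by auto
    then show "indicator (space M \<inter> {\<omega>\<in>space M. Kn b n (\<rho> \<omega>) = k}) \<in> borel_measurable (F b)"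
      by (simp add: Int_absorb1)
    show "Y (gr b n k) \<in> borel_measurable (F b)" using meas_mono[OF g Ym[OF k]] .
  qed
  then show ?thesis by (rule measurable_cong[THEN iffD2, rotated]) (rule eq)
qed

lemma prog:
  fixes Y :: "real \<Rightarrow> 'a \<Rightarrow> real"
  assumes Tm: "0 < Tm" and adapted: "\<forall>s\<in>{0..Tm}. Y s \<in> borel_measurable (F s)"
    and rc: "\<forall>\<omega>\<in>space M. \<forall>s\<in>{0..<Tm}. ((\<lambda>u. Y u \<omega>) \<longlongrightarrow> Y s \<omega>) (at_right s)"
    and st: "stopping_time F \<theta>" and rng: "\<forall>\<omega>\<in>space M. 0 \<le> \<theta> \<omega> \<and> \<theta> \<omega> \<le> Tm"
    and t: "t \<in> {0..Tm}"
  shows "(\<lambda>\<omega>. Y (min t (\<theta> \<omega>)) \<omega>) \<in> borel_measurable (F t)"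
proof (cases "t = 0")
  case True
  have "(\<lambda>\<omega>. Y 0 \<omega>) \<in> borel_measurable (F t)" using adapted Tm True by simp
  moreover have "\<And>\<omega>. \<omega> \<in> space (F t) \<Longrightarrow> Y (min t (\<theta> \<omega>)) \<omega> = Y 0 \<omega>" using rng True by (simp add: min_def)
  ultimately show ?thesis by (rule measurable_cong[THEN iffD2, rotated])
next
  case False
  then have t0: "0 < t" using t by simp
  define \<rho> where "\<rho> \<omega> = min t (\<theta> \<omega>)" for \<omega>
  have st\<rho>: "stopping_time F \<rho>" unfolding \<rho>_def by (intro stopping_time_min stopping_time_const st)
  have rng\<rho>: "\<forall>\<omega>\<in>space M. 0 \<le> \<rho> \<omega> \<and> \<rho> \<omega> \<le> t" unfolding \<rho>_def using rng t by auto
  show ?thesis unfolding \<rho>_def[symmetric]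
  proof (rule borel_measurable_LIMSEQ_real)
    fix \<omega> assume "\<omega> \<in> space (F t)"
    then have \<omega>: "\<omega> \<in> space M" by simp
    show "(\<lambda>n. Y (gr t n (Kn t n (\<rho> \<omega>))) \<omega>) \<longlonglongrightarrow> Y (\<rho> \<omega>) \<omega>"
    proof (rule grid_conv[where f="\<lambda>s. Y s \<omega>"])
      show "0 < t" "0 \<le> \<rho> \<omega>" "\<rho> \<omega> \<le> t" using t0 rng\<rho> \<omega> by auto
      assume "\<rho> \<omega> < t"
      then have "\<rho> \<omega> \<in> {0..<Tm}" using rng\<rho> \<omega> t by auto
      then show "((\<lambda>s. Y s \<omega>) \<longlongrightarrow> Y (\<rho> \<omega>) \<omega>) (at_right (\<rho> \<omega>))" using rc \<omega> by auto
    qed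
  next
    fix n
    show "(\<lambda>\<omega>. Y (gr t n (Kn t n (\<rho> \<omega>))) \<omega>) \<in> borel_measurable (F t)"
    proof (rule disc_meas[OF t0 st\<rho> rng\<rho>])
      fix k :: nat assume "k \<le> 2^n"
      then have "gr t n k \<in> {0..Tm}" using gr_range[OF t0] t by fastforce
      then show "Y (gr t n k) \<in> borel_measurable (F (gr t n k))" using adapted by auto
    qed
  qed
qed

end

context fs begin

lemma disc_sum:
  fixes f :: "nat \<Rightarrow> real"
  assumes Tm: "0 < Tm" and rng: "\<forall>\<omega>\<in>space M. 0 \<le> \<theta> \<omega> \<and> \<theta> \<omega> \<le> Tm" and B: "B \<subseteq> space M"
    and \<omega>: "\<omega> \<in> space M"
  shows "indicator B \<omega> * f (Kn Tm n (\<theta> \<omega>)) = (\<Sum>k\<le>2^n. indicator (B \<inter> {\<omega>\<in>space M. Kn Tm n (\<theta> \<omega>) = k}) \<omega> * f k)"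
proof -
  have "Kn Tm n (\<theta> \<omega>) \<le> 2^n" using Kn_le[OF Tm] rng \<omega> by auto
  from sumrep[of Tm n \<theta> \<omega> B "space M" f, OF this] show ?thesis using B by (simp add: Int_absorb2)
qed

lemma mgc_at:
  assumes mg: "mgc Tm Y Z" and v: "v \<in> {0..Tm}"
  shows "Y v \<in> borel_measurable (F v)" "integrable M (Y v)" "integrable M Z"
    "\<And>A. A \<in> sets (F v) \<Longrightarrow> (\<integral>x. indicator A x * Y v x \<partial>M) = (\<integral>x. indicator A x * Z x \<partial>M)"
  using mg v unfolding mgc_def by auto

lemma iind: "S \<in> sets M \<Longrightarrow> integrable M f \<Longrightarrow> integrable M (\<lambda>x. indicator S x * f x :: real)"
  using integrable_real_mult_indicator[of S M f] by (simp add: mult.commute)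

lemma disc_int:
  assumes mg: "mgc Tm Y Z" and Tm: "0 < Tm" and rng: "\<forall>\<omega>\<in>space M. 0 \<le> \<theta> \<omega> \<and> \<theta> \<omega> \<le> Tm"
    and B: "B \<subseteq> space M"
    and HB: "\<And>k. k \<le> 2^n \<Longrightarrow> B \<inter> {\<omega>\<in>space M. Kn Tm n (\<theta> \<omega>) = k} \<in> sets (F (gr Tm n k))"
  shows "(\<integral>\<omega>. indicator B \<omega> * Y (gr Tm n (Kn Tm n (\<theta> \<omega>))) \<omega> \<partial>M) = (\<integral>\<omega>. indicator B \<omega> * Z \<omega> \<partial>M)"
proof -
  let ?C = "\<lambda>k. B \<inter> {\<omega>\<in>space M. Kn Tm n (\<theta> \<omega>) = k}"
  have g: "gr Tm n k \<in> {0..Tm}" if "k \<le> 2^n" for k using gr_range[OF Tm that] by auto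
  have CM: "?C k \<in> sets M" if "k \<le> 2^n" for k using HB[OF that] sets_M by blast
  have "(\<integral>\<omega>. indicator B \<omega> * Y (gr Tm n (Kn Tm n (\<theta> \<omega>))) \<omega> \<partial>M)
      = (\<integral>\<omega>. (\<Sum>k\<le>2^n. indicator (?C k) \<omega> * Y (gr Tm n k) \<omega>) \<partial>M)"
  proof (rule Bochner_Integration.integral_cong[OF refl])
    fix \<omega> assume \<omega>: "\<omega> \<in> space M"
    show "indicator B \<omega> * Y (gr Tm n (Kn Tm n (\<theta> \<omega>))) \<omega> = (\<Sum>k\<le>2^n. indicator (?C k) \<omega> * Y (gr Tm n k) \<omega>)"
      using disc_sum[OF Tm rng B \<omega>, of "\<lambda>k. Y (gr Tm n k) \<omega>" n] by simp
  qed
  also have "\<dots> = (\<Sum>k\<le>2^n. (\<integral>\<omega>. indicator (?C k) \<omega> * Y (gr Tm n k) \<omega> \<partial>M))"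
    by (rule Bochner_Integration.integral_sum) (rule iind[OF CM mgc_at(2)[OF mg g]]; simp)
  also have "\<dots> = (\<Sum>k\<le>2^n. (\<integral>\<omega>. indicator (?C k) \<omega> * Z \<omega> \<partial>M))"
    by (rule sum.cong[OF refl]) (use mgc_at(4)[OF mg g HB] in auto)
  also have "\<dots> = (\<integral>\<omega>. (\<Sum>k\<le>2^n. indicator (?C k) \<omega> * Z \<omega>) \<partial>M)"
    by (rule Bochner_Integration.integral_sum[symmetric]) (rule iind[OF CM mgc_at(3)[OF mg, of 0]]; use Tm in simp)
  also have "\<dots> = (\<integral>\<omega>. indicator B \<omega> * Z \<omega> \<partial>M)"
  proof (rule Bochner_Integration.integral_cong[OF refl])
    fix \<omega> assume \<omega>: "\<omega> \<in> space M"
    show "(\<Sum>k\<le>2^n. indicator (?C k) \<omega> * Z \<omega>) = indicator B \<omega> * Z \<omega>"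
      using disc_sum[OF Tm rng B \<omega>, of "\<lambda>k. Z \<omega>" n] by linarith
  qed
  finally show ?thesis .
qed

lemma disc_abs:
  assumes mg: "mgc Tm Y Z" and Tm: "0 < Tm" and rng: "\<forall>\<omega>\<in>space M. 0 \<le> \<theta> \<omega> \<and> \<theta> \<omega> \<le> Tm"
    and B: "B \<subseteq> space M"
    and HB: "\<And>k. k \<le> 2^n \<Longrightarrow> B \<inter> {\<omega>\<in>space M. Kn Tm n (\<theta> \<omega>) = k} \<in> sets (F (gr Tm n k))"
  shows "(\<integral>\<omega>. indicator B \<omega> * \<bar>Y (gr Tm n (Kn Tm n (\<theta> \<omega>))) \<omega>\<bar> \<partial>M) \<le> (\<integral>\<omega>. indicator B \<omega> * \<bar>Z \<omega>\<bar> \<partial>M)"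
proof -
  let ?C = "\<lambda>k. B \<inter> {\<omega>\<in>space M. Kn Tm n (\<theta> \<omega>) = k}"
  have g: "gr Tm n k \<in> {0..Tm}" if "k \<le> 2^n" for k using gr_range[OF Tm that] by auto
  have CM: "?C k \<in> sets M" if "k \<le> 2^n" for k using HB[OF that] sets_M by blast
  have "(\<integral>\<omega>. indicator B \<omega> * \<bar>Y (gr Tm n (Kn Tm n (\<theta> \<omega>))) \<omega>\<bar> \<partial>M)
      = (\<integral>\<omega>. (\<Sum>k\<le>2^n. indicator (?C k) \<omega> * \<bar>Y (gr Tm n k) \<omega>\<bar>) \<partial>M)"
  proof (rule Bochner_Integration.integral_cong[OF refl])
    fix \<omega> assume \<omega>: "\<omega> \<in> space M"
    show "indicator B \<omega> * \<bar>Y (gr Tm n (Kn Tm n (\<theta> \<omega>))) \<omega>\<bar> = (\<Sum>k\<le>2^n. indicator (?C k) \<omega> * \<bar>Y (gr Tm n k) \<omega>\<bar>)"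
      using disc_sum[OF Tm rng B \<omega>, of "\<lambda>k. \<bar>Y (gr Tm n k) \<omega>\<bar>" n] by simp
  qed
  also have "\<dots> = (\<Sum>k\<le>2^n. (\<integral>\<omega>. indicator (?C k) \<omega> * \<bar>Y (gr Tm n k) \<omega>\<bar> \<partial>M))"
    by (rule Bochner_Integration.integral_sum) (rule iind[OF CM integrable_abs[OF mgc_at(2)[OF mg g]]]; simp)
  also have "\<dots> \<le> (\<Sum>k\<le>2^n. (\<integral>\<omega>. indicator (?C k) \<omega> * \<bar>Z \<omega>\<bar> \<partial>M))"
    by (rule sum_mono, rule absbound[OF mg g HB]) simp_all
  also have "\<dots> = (\<integral>\<omega>. (\<Sum>k\<le>2^n. indicator (?C k) \<omega> * \<bar>Z \<omega>\<bar>) \<partial>M)"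
    by (rule Bochner_Integration.integral_sum[symmetric]) (rule iind[OF CM integrable_abs[OF mgc_at(3)[OF mg, of 0]]]; use Tm in simp)
  also have "\<dots> = (\<integral>\<omega>. indicator B \<omega> * \<bar>Z \<omega>\<bar> \<partial>M)"
  proof (rule Bochner_Integration.integral_cong[OF refl])
    fix \<omega> assume \<omega>: "\<omega> \<in> space M"
    show "(\<Sum>k\<le>2^n. indicator (?C k) \<omega> * \<bar>Z \<omega>\<bar>) = indicator B \<omega> * \<bar>Z \<omega>\<bar>"
      using disc_sum[OF Tm rng B \<omega>, of "\<lambda>k. \<bar>Z \<omega>\<bar>" n] by linarith
  qed
  finally show ?thesis .
qed

lemma disc_integrable:
  assumes mg: "mgc Tm Y Z" and Tm: "0 < Tm" and st: "stopping_time F \<theta>"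
    and rng: "\<forall>\<omega>\<in>space M. 0 \<le> \<theta> \<omega> \<and> \<theta> \<omega> \<le> Tm"
  shows "integrable M (\<lambda>\<omega>. Y (gr Tm n (Kn Tm n (\<theta> \<omega>))) \<omega>)"
proof -
  let ?C = "\<lambda>k. space M \<inter> {\<omega>\<in>space M. Kn Tm n (\<theta> \<omega>) = k}"
  have g: "gr Tm n k \<in> {0..Tm}" if "k \<le> 2^n" for k using gr_range[OF Tm that] by auto
  have CM: "?C k \<in> sets M" for k
  proof -
    have "{\<omega>\<in>space M. Kn Tm n (\<theta> \<omega>) = k} \<in> sets (F (gr Tm n k))"
      by (rule Cmeas_space[OF Tm st]) (use rng in auto)
    then have "{\<omega>\<in>space M. Kn Tm n (\<theta> \<omega>) = k} \<in> sets M" by (rule sets_M)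
    moreover have "?C k = {\<omega>\<in>space M. Kn Tm n (\<theta> \<omega>) = k}" by blast
    ultimately show ?thesis by simp
  qed
  have i: "integrable M (\<lambda>\<omega>. \<Sum>k\<le>2^n. indicator (?C k) \<omega> * Y (gr Tm n k) \<omega>)"
    by (rule Bochner_Integration.integrable_sum, rule iind[OF CM mgc_at(2)[OF mg g]]) simp_all
  have eq: "Y (gr Tm n (Kn Tm n (\<theta> \<omega>))) \<omega> = (\<Sum>k\<le>2^n. indicator (?C k) \<omega> * Y (gr Tm n k) \<omega>)"
    if \<omega>: "\<omega> \<in> space M" for \<omega>
  proof -
    have "indicator (space M) \<omega> * Y (gr Tm n (Kn Tm n (\<theta> \<omega>))) \<omega> = (\<Sum>k\<le>2^n. indicator (?C k) \<omega> * Y (gr Tm n k) \<omega>)"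
      by (rule disc_sum[OF Tm rng order_refl \<omega>])
    then show ?thesis using \<omega> by simp
  qed
  have "integrable M (\<lambda>\<omega>. Y (gr Tm n (Kn Tm n (\<theta> \<omega>))) \<omega>) \<longleftrightarrow> integrable M (\<lambda>\<omega>. \<Sum>k\<le>2^n. indicator (?C k) \<omega> * Y (gr Tm n k) \<omega>)"
    by (rule Bochner_Integration.integrable_cong[OF refl]) (rule eq)
  then show ?thesis using i by blast
qed

end

context fs begin

lemma key:
  fixes Y :: "real \<Rightarrow> 'a \<Rightarrow> real"
  assumes mg: "mgc Tm Y Z" and Tm: "0 < Tm"
    and rc: "\<forall>\<omega>\<in>space M. \<forall>s\<in>{0..<Tm}. ((\<lambda>u. Y u \<omega>) \<longlongrightarrow> Y s \<omega>) (at_right s)"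
    and st: "stopping_time F \<theta>" and rng: "\<forall>\<omega>\<in>space M. 0 \<le> \<theta> \<omega> \<and> \<theta> \<omega> \<le> Tm"
    and int\<theta>: "integrable M (\<lambda>\<omega>. Y (\<theta> \<omega>) \<omega>)"
    and B: "B \<subseteq> space M" and HB: "\<And>v. {\<omega>\<in>B. \<theta> \<omega> \<le> v} \<in> sets (F v)"
  shows "(\<integral>\<omega>. indicator B \<omega> * Y (\<theta> \<omega>) \<omega> \<partial>M) = (\<integral>\<omega>. indicator B \<omega> * Z \<omega> \<partial>M)"
proof -
  define Wn where "Wn n \<omega> = Y (gr Tm n (Kn Tm n (\<theta> \<omega>))) \<omega>" for n \<omega>
  have g: "gr Tm n k \<in> {0..Tm}" if "k \<le> 2^n" for n k using gr_range[OF Tm that] by auto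
  have rng0: "\<forall>\<omega>\<in>space M. 0 \<le> \<theta> \<omega>" using rng by auto
  have Ck: "{\<omega>\<in>space M. Kn Tm n (\<theta> \<omega>) = k} \<in> sets (F (gr Tm n k))" for n k
    by (rule Cmeas_space[OF Tm st rng0])
  have BM: "B \<in> sets M"
  proof -
    have "{\<omega>\<in>B. \<theta> \<omega> \<le> Tm} = B" using B rng by auto
    then show ?thesis using HB[of Tm] sets_M by metis
  qed
  show ?thesis
  proof (rule ui_limit[where Wn=Wn])
    show "integrable M Z" using mg unfolding mgc_def by simp
    show "integrable M (\<lambda>\<omega>. Y (\<theta> \<omega>) \<omega>)" by (rule int\<theta>)
    show "integrable M (Wn n)" for n unfolding Wn_def by (rule disc_integrable[OF mg Tm st rng])
    show "B \<in> sets M" by (rule BM)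
    fix \<omega> assume \<omega>: "\<omega> \<in> space M"
    show "(\<lambda>n. Wn n \<omega>) \<longlonglongrightarrow> Y (\<theta> \<omega>) \<omega>" unfolding Wn_def
    proof (rule grid_conv[where f="\<lambda>s. Y s \<omega>"])
      show "0 < Tm" "0 \<le> \<theta> \<omega>" "\<theta> \<omega> \<le> Tm" using Tm rng \<omega> by auto
      assume "\<theta> \<omega> < Tm"
      then show "((\<lambda>s. Y s \<omega>) \<longlongrightarrow> Y (\<theta> \<omega>) \<omega>) (at_right (\<theta> \<omega>))" using rc \<omega> rng by auto
    qed
  next
    fix n
    show "(\<integral>\<omega>. indicator B \<omega> * Wn n \<omega> \<partial>M) = (\<integral>\<omega>. indicator B \<omega> * Z \<omega> \<partial>M)"
      unfolding Wn_def by (rule disc_int[OF mg Tm rng B Cmeas[OF Tm rng0 B HB]])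
  next
    fix n and c :: real assume c: "0 < c"
    define S where "S = {\<omega>\<in>space M. c < \<bar>Wn n \<omega>\<bar>}"
    have "S \<inter> {\<omega>\<in>space M. Kn Tm n (\<theta> \<omega>) = k} \<in> sets (F (gr Tm n k))" if k: "k \<le> 2^n" for k
    proof -
      have Ym[measurable]: "Y (gr Tm n k) \<in> borel_measurable (F (gr Tm n k))"
        using mgc_at(1)[OF mg g[OF k]] .
      have "{\<omega>\<in>space (F (gr Tm n k)). c < \<bar>Y (gr Tm n k) \<omega>\<bar>} \<in> sets (F (gr Tm n k))" by measurable
      then have "{\<omega>\<in>space M. Kn Tm n (\<theta> \<omega>) = k} \<inter> {\<omega>\<in>space M. c < \<bar>Y (gr Tm n k) \<omega>\<bar>} \<in> sets (F (gr Tm n k))"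
        using Ck by auto
      moreover have "S \<inter> {\<omega>\<in>space M. Kn Tm n (\<theta> \<omega>) = k} = {\<omega>\<in>space M. Kn Tm n (\<theta> \<omega>) = k} \<inter> {\<omega>\<in>space M. c < \<bar>Y (gr Tm n k) \<omega>\<bar>}"
        unfolding S_def Wn_def by auto
      ultimately show ?thesis by simp
    qed
    from disc_abs[OF mg Tm rng _ this]
    show "(\<integral>\<omega>. indicator {\<omega>\<in>space M. c < \<bar>Wn n \<omega>\<bar>} \<omega> * \<bar>Wn n \<omega>\<bar> \<partial>M)
               \<le> (\<integral>\<omega>. indicator {\<omega>\<in>space M. c < \<bar>Wn n \<omega>\<bar>} \<omega> * \<bar>Z \<omega>\<bar> \<partial>M)"
      unfolding S_def Wn_def by auto
  next
    fix n
    have "(\<integral>\<omega>. indicator (space M) \<omega> * \<bar>Wn n \<omega>\<bar> \<partial>M) \<le> (\<integral>\<omega>. indicator (space M) \<omega> * \<bar>Z \<omega>\<bar> \<partial>M)"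
      unfolding Wn_def by (rule disc_abs[OF mg Tm rng order_refl]) (use Ck in \<open>simp add: Int_absorb1\<close>)
    moreover have "(\<integral>\<omega>. indicator (space M) \<omega> * \<bar>Wn n \<omega>\<bar> \<partial>M) = (\<integral>\<omega>. \<bar>Wn n \<omega>\<bar> \<partial>M)"
      by (rule Bochner_Integration.integral_cong[OF refl]) simp
    moreover have "(\<integral>\<omega>. indicator (space M) \<omega> * \<bar>Z \<omega>\<bar> \<partial>M) = (\<integral>\<omega>. \<bar>Z \<omega>\<bar> \<partial>M)"
      by (rule Bochner_Integration.integral_cong[OF refl]) simp
    ultimately show "(\<integral>\<omega>. \<bar>Wn n \<omega>\<bar> \<partial>M) \<le> (\<integral>\<omega>. \<bar>Z \<omega>\<bar> \<partial>M)" by simp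
  qed
qed

lemma ost:
  fixes Y :: "real \<Rightarrow> 'a \<Rightarrow> real"
  assumes mg: "mgc Tm Y Z" and Tm: "0 < Tm"
    and rc: "\<forall>\<omega>\<in>space M. \<forall>s\<in>{0..<Tm}. ((\<lambda>u. Y u \<omega>) \<longlongrightarrow> Y s \<omega>) (at_right s)"
    and st: "stopping_time F \<theta>" and rng: "\<forall>\<omega>\<in>space M. 0 \<le> \<theta> \<omega> \<and> \<theta> \<omega> \<le> Tm"
    and int\<theta>: "integrable M (\<lambda>\<omega>. Y (\<theta> \<omega>) \<omega>)"
    and intt: "integrable M (\<lambda>\<omega>. Y (min t (\<theta> \<omega>)) \<omega>)"
    and t: "t \<in> {0..Tm}"
  shows "AE \<omega> in M. real_cond_exp M (F t) (\<lambda>\<omega>. Y (\<theta> \<omega>) \<omega>) \<omega> = Y (min t (\<theta> \<omega>)) \<omega>"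
proof (rule sigma_finite_subalgebra.real_cond_exp_charact[OF sfs])
  show "integrable M (\<lambda>\<omega>. Y (\<theta> \<omega>) \<omega>)" by (rule int\<theta>)
  show "integrable M (\<lambda>\<omega>. Y (min t (\<theta> \<omega>)) \<omega>)" by (rule intt)
  show "(\<lambda>\<omega>. Y (min t (\<theta> \<omega>)) \<omega>) \<in> borel_measurable (F t)"
    by (rule prog[OF Tm _ rc st rng t]) (use mg in \<open>simp add: mgc_def\<close>)
  fix A assume A: "A \<in> sets (F t)"
  have AM: "A \<in> sets M" using A sets_M by blast
  have Asp: "A \<subseteq> space M" using sets.sets_into_space[OF AM] .
  define A2 where "A2 = A \<inter> {\<omega>\<in>space M. t < \<theta> \<omega>}"
  have A2F: "A2 \<in> sets (F t)" unfolding A2_def using A stopped_sets2[OF st, of t] by auto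
  have A2M: "A2 \<in> sets M" using A2F sets_M by blast
  have HB: "{\<omega>\<in>A2. \<theta> \<omega> \<le> v} \<in> sets (F v)" for v
  proof (cases "v \<le> t")
    case True
    then have e: "{\<omega>\<in>A2. \<theta> \<omega> \<le> v} = {}" unfolding A2_def by auto
    show ?thesis unfolding e by (rule sets.empty_sets)
  next
    case False
    then have "A2 \<in> sets (F v)" using A2F sets_F_mono[of t v] by auto
    then have "A2 \<inter> {\<omega>\<in>space M. \<theta> \<omega> \<le> v} \<in> sets (F v)" using stopped_sets[OF st, of v] by auto
    moreover have "A2 \<inter> {\<omega>\<in>space M. \<theta> \<omega> \<le> v} = {\<omega>\<in>A2. \<theta> \<omega> \<le> v}" unfolding A2_def using Asp by auto
    ultimately show ?thesis by simp
  qed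
  have k1: "(\<integral>\<omega>. indicator A2 \<omega> * Y (\<theta> \<omega>) \<omega> \<partial>M) = (\<integral>\<omega>. indicator A2 \<omega> * Z \<omega> \<partial>M)"
    by (rule key[OF mg Tm rc st rng int\<theta> _ HB]) (use Asp in \<open>auto simp: A2_def\<close>)
  have k2: "(\<integral>\<omega>. indicator A2 \<omega> * Y t \<omega> \<partial>M) = (\<integral>\<omega>. indicator A2 \<omega> * Z \<omega> \<partial>M)"
    by (rule mgc_at(4)[OF mg t A2F])
  have iYt: "integrable M (Y t)" by (rule mgc_at(2)[OF mg t])
  have "(\<integral>\<omega>. indicator A \<omega> * Y (\<theta> \<omega>) \<omega> \<partial>M) - (\<integral>\<omega>. indicator A \<omega> * Y (min t (\<theta> \<omega>)) \<omega> \<partial>M)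
     = (\<integral>\<omega>. indicator A \<omega> * Y (\<theta> \<omega>) \<omega> - indicator A \<omega> * Y (min t (\<theta> \<omega>)) \<omega> \<partial>M)"
    using iind[OF AM int\<theta>] iind[OF AM intt] by simp
  also have "\<dots> = (\<integral>\<omega>. indicator A2 \<omega> * Y (\<theta> \<omega>) \<omega> - indicator A2 \<omega> * Y t \<omega> \<partial>M)"
    by (rule Bochner_Integration.integral_cong[OF refl]) (auto simp: A2_def indicator_def min_def)
  also have "\<dots> = (\<integral>\<omega>. indicator A2 \<omega> * Y (\<theta> \<omega>) \<omega> \<partial>M) - (\<integral>\<omega>. indicator A2 \<omega> * Y t \<omega> \<partial>M)"
    using iind[OF A2M int\<theta>] iind[OF A2M iYt] by simp
  also have "\<dots> = 0" using k1 k2 by simp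
  finally show "(\<integral>\<omega>\<in>A. Y (\<theta> \<omega>) \<omega> \<partial>M) = (\<integral>\<omega>\<in>A. Y (min t (\<theta> \<omega>)) \<omega> \<partial>M)"
    unfolding set_lebesgue_integral_def by simp
qed

end

definition ce :: "'a measure \<Rightarrow> 'a measure \<Rightarrow> ('a \<Rightarrow> real) \<Rightarrow> ('a \<Rightarrow> real) \<Rightarrow> bool" where
  "ce M G a A \<longleftrightarrow> integrable M a \<and> (AE x in M. real_cond_exp M G a x = A x)"

context sigma_finite_subalgebra begin

lemma ce_add: "ce M F a A \<Longrightarrow> ce M F b B \<Longrightarrow> ce M F (\<lambda>x. a x + b x) (\<lambda>x. A x + B x)"
  unfolding ce_def using real_cond_exp_add[of a b] by auto

lemma ce_diff: "ce M F a A \<Longrightarrow> ce M F b B \<Longrightarrow> ce M F (\<lambda>x. a x - b x) (\<lambda>x. A x - B x)"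
proof -
  assume "ce M F a A" "ce M F b B"
  then have ia: "integrable M a" and ib: "integrable M b" and aA: "AE x in M. real_cond_exp M F a x = A x"
    and bB: "AE x in M. real_cond_exp M F b x = B x" unfolding ce_def by auto
  have d: "AE x in M. real_cond_exp M F (\<lambda>x. a x - b x) x = real_cond_exp M F a x - real_cond_exp M F b x"
    by (rule real_cond_exp_diff[OF ia ib])
  have "AE x in M. real_cond_exp M F (\<lambda>x. a x - b x) x = A x - B x"
    using d aA bB by eventually_elim simp
  then show ?thesis unfolding ce_def using ia ib by auto
qed

lemma ce_self: "integrable M a \<Longrightarrow> ce M F a (real_cond_exp M F a)"
  unfolding ce_def by auto

lemma ce_meas: "integrable M a \<Longrightarrow> a \<in> borel_measurable F \<Longrightarrow> ce M F a a"
  unfolding ce_def using real_cond_exp_F_meas[of a] by auto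

lemma ce_mult: "ce M F a A \<Longrightarrow> g \<in> borel_measurable F \<Longrightarrow> integrable M (\<lambda>x. g x * a x) \<Longrightarrow>
    ce M F (\<lambda>x. g x * a x) (\<lambda>x. g x * A x)"
  unfolding ce_def using real_cond_exp_mult[of g a] by (auto simp: borel_measurable_integrable)

lemma ce_cong: "ce M F a A \<Longrightarrow> (\<And>x. x \<in> space M \<Longrightarrow> b x = a x) \<Longrightarrow> ce M F b A"
proof -
  assume ce: "ce M F a A" and eq: "\<And>x. x \<in> space M \<Longrightarrow> b x = a x"
  have ia: "integrable M a" using ce unfolding ce_def by simp
  have "integrable M b \<longleftrightarrow> integrable M a" by (rule Bochner_Integration.integrable_cong[OF refl]) (rule eq)
  then have ib: "integrable M b" using ia by simp
  have "AE x in M. real_cond_exp M F b x = real_cond_exp M F a x"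
    by (rule real_cond_exp_cong) (use eq ia ib in auto)
  then show ?thesis using ce ib unfolding ce_def by auto
qed

lemma ce_cong_val: "ce M F a A \<Longrightarrow> AE x in M. A x = B x \<Longrightarrow> ce M F a B"
  unfolding ce_def by auto

lemma ce_unique: "ce M F a A \<Longrightarrow> ce M F a B \<Longrightarrow> AE x in M. A x = B x"
  unfolding ce_def by auto

lemma ce_AE: "ce M F a A \<Longrightarrow> AE x in M. real_cond_exp M F a x = A x"
  unfolding ce_def by auto

end

context fs begin

lemma mart_mgc:
  assumes mart: "martingale M F Tm Y" and Tm: "0 \<le> Tm"
  shows "mgc Tm Y (Y Tm)"
  unfolding mgc_def
proof (intro conjI ballI)
  have ad: "\<forall>t\<in>{0..Tm}. Y t \<in> borel_measurable (F t)" and it: "\<forall>t\<in>{0..Tm}. integrable M (Y t)"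
    and ae: "\<And>s t. 0 \<le> s \<Longrightarrow> s \<le> t \<Longrightarrow> t \<le> Tm \<Longrightarrow> AE \<omega> in M. real_cond_exp M (F s) (Y t) \<omega> = Y s \<omega>"
    using mart unfolding martingale_def adapted_def by auto
  show iT: "integrable M (Y Tm)" using it Tm by auto
  fix t assume t: "t \<in> {0..Tm}"
  show "Y t \<in> borel_measurable (F t)" "integrable M (Y t)" using ad it t by auto
  fix A assume A: "A \<in> sets (F t)"
    interpret S: sigma_finite_subalgebra M "F t" by (rule sfs)
    have AM: "A \<in> sets M" using A sets_M by blast
    have "(\<integral>x. indicator A x * Y Tm x \<partial>M) = (\<integral>x. indicator A x * real_cond_exp M (F t) (Y Tm) x \<partial>M)"
      by (rule S.real_cond_exp_intg(2)[symmetric]) (use iind[OF AM iT] A iT in auto)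
    also have "\<dots> = (\<integral>x. indicator A x * Y t x \<partial>M)"
    proof (rule integral_cong_AE)
      have [measurable]: "Y t \<in> borel_measurable M" "A \<in> sets M" using it t AM by auto
      show "(\<lambda>x. indicator A x * real_cond_exp M (F t) (Y Tm) x) \<in> borel_measurable M" by measurable
      show "(\<lambda>x. indicator A x * Y t x) \<in> borel_measurable M" by measurable
      have aet: "AE \<omega> in M. real_cond_exp M (F t) (Y Tm) \<omega> = Y t \<omega>" using ae[of t Tm] t by simp
      then show "AE x in M. indicator A x * real_cond_exp M (F t) (Y Tm) x = indicator A x * Y t x"
        by eventually_elim simp
    qed
    finally show "(\<integral>x. indicator A x * Y t x \<partial>M) = (\<integral>x. indicator A x * Y Tm x \<partial>M)" by simp
qed

lemma va_mgc:
  assumes Tm: "0 \<le> Tm"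
    and ad: "\<forall>t\<in>{0..Tm}. Pc t \<in> borel_measurable (F t)" "\<forall>t\<in>{0..Tm}. Pv t \<in> borel_measurable (F t)"
    and it: "\<forall>t\<in>{0..Tm}. integrable M (Pc t)" "\<forall>t\<in>{0..Tm}. integrable M (Pv t)"
    and va: "\<forall>t\<in>{0..Tm}. AE \<omega> in M. Pv t \<omega> = va M F Tm Pc t \<omega>"
  shows "mgc Tm (\<lambda>t \<omega>. Pc t \<omega> + Pv t \<omega>) (Pc Tm)"
  unfolding mgc_def
proof (intro conjI ballI)
  show iT: "integrable M (Pc Tm)" using it Tm by auto
  fix t assume t: "t \<in> {0..Tm}"
  have [measurable]: "Pc t \<in> borel_measurable (F t)" "Pv t \<in> borel_measurable (F t)" using ad t by auto
  show "(\<lambda>\<omega>. Pc t \<omega> + Pv t \<omega>) \<in> borel_measurable (F t)" by measurable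
  show "integrable M (\<lambda>\<omega>. Pc t \<omega> + Pv t \<omega>)" using it t by auto
  fix A assume A: "A \<in> sets (F t)"
    interpret S: sigma_finite_subalgebra M "F t" by (rule sfs)
    have AM: "A \<in> sets M" using A sets_M by blast
    have it1: "integrable M (Pc t)" "integrable M (Pv t)" using it t by auto
    have idf: "integrable M (\<lambda>x. Pc Tm x - Pc t x)" using iT it1 by auto
    have "(\<integral>x. indicator A x * Pv t x \<partial>M) = (\<integral>x. indicator A x * real_cond_exp M (F t) (\<lambda>x. Pc Tm x - Pc t x) x \<partial>M)"
    proof (rule integral_cong_AE)
      have [measurable]: "Pv t \<in> borel_measurable M" "A \<in> sets M" using it1 AM by auto
      show "(\<lambda>x. indicator A x * Pv t x) \<in> borel_measurable M" by measurable
      show "(\<lambda>x. indicator A x * real_cond_exp M (F t) (\<lambda>x. Pc Tm x - Pc t x) x) \<in> borel_measurable M" by measurable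
      have aet: "AE \<omega> in M. Pv t \<omega> = real_cond_exp M (F t) (\<lambda>x. Pc Tm x - Pc t x) \<omega>" using va t by (simp add: va_def)
      then show "AE x in M. indicator A x * Pv t x = indicator A x * real_cond_exp M (F t) (\<lambda>x. Pc Tm x - Pc t x) x"
        by eventually_elim simp
    qed
    also have "\<dots> = (\<integral>x. indicator A x * (Pc Tm x - Pc t x) \<partial>M)"
      by (rule S.real_cond_exp_intg(2)) (use iind[OF AM idf] A idf in auto)
    also have "\<dots> = (\<integral>x. indicator A x * Pc Tm x \<partial>M) - (\<integral>x. indicator A x * Pc t x \<partial>M)"
      using iind[OF AM iT] iind[OF AM it1(1)] by (simp add: right_diff_distrib)
    finally have "(\<integral>x. indicator A x * Pv t x \<partial>M) = (\<integral>x. indicator A x * Pc Tm x \<partial>M) - (\<integral>x. indicator A x * Pc t x \<partial>M)" .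
    moreover have "(\<integral>x. indicator A x * (Pc t x + Pv t x) \<partial>M) = (\<integral>x. indicator A x * Pc t x \<partial>M) + (\<integral>x. indicator A x * Pv t x \<partial>M)"
      using iind[OF AM it1(1)] iind[OF AM it1(2)] by (simp add: distrib_left)
    ultimately show "(\<integral>x. indicator A x * (Pc t x + Pv t x) \<partial>M) = (\<integral>x. indicator A x * Pc Tm x \<partial>M)" by simp
qed

end

lemma ibnd:
  fixes f g :: "'a \<Rightarrow> real"
  assumes "integrable M f" "g \<in> borel_measurable M" "\<And>x. x\<in>space M \<Longrightarrow> \<bar>g x\<bar> \<le> 1"
  shows "integrable M (\<lambda>x. g x * f x)"
proof (rule intb[where f=f])
  show "(\<lambda>x. g x * f x) \<in> borel_measurable M" using assms by (auto simp: borel_measurable_integrable)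
  fix x assume "x \<in> space M"
  then have "\<bar>g x\<bar> * \<bar>f x\<bar> \<le> 1 * \<bar>f x\<bar>" using assms(3) by (intro mult_right_mono) auto
  then show "\<bar>g x * f x\<bar> \<le> \<bar>f x\<bar>" by (simp add: abs_mult)
qed (rule assms(1))

theorem proposition3p2:
  fixes M :: "'a measure" and F :: "real \<Rightarrow> 'a measure" and Tm :: real
    and Qc Qv K Pc Pv q p h :: "real \<Rightarrow> 'a \<Rightarrow> real"
    and \<tau>s \<theta> :: "'a \<Rightarrow> real"
  assumes prob: "prob_space M"
    and filt: "usual_filtration M F Tm"
    and Qc: "adapted F Tm Qc" "cadlag M Tm Qc" "\<forall>\<omega>\<in>space M. Qc 0 \<omega> = 0"
    and Qv: "adapted F Tm Qv" "cadlag M Tm Qv" "callable_value M F Tm Qc Qv"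
    and K: "adapted F Tm K" "cadlag M Tm K" "is_drift M F Tm (\<lambda>t \<omega>. Qc t \<omega> + Qv t \<omega>) K"
    and Pc: "adapted F Tm Pc" "cadlag M Tm Pc" "\<forall>\<omega>\<in>space M. Pc 0 \<omega> = 0"
    and Pv: "adapted F Tm Pv" "cadlag M Tm Pv"
            "\<forall>t\<in>{0..Tm}. AE \<omega> in M. Pv t \<omega> = va M F Tm Pc t \<omega>"
    and q: "semimartingale M F Tm q" "\<forall>\<omega>\<in>space M. q Tm \<omega> = 0"
    and p: "semimartingale M F Tm p"
    and \<tau>s: "stopping_time F \<tau>s" "\<forall>\<omega>\<in>space M. \<tau>s \<omega> \<in> {0<..Tm}"
    and \<theta>: "stopping_time_in M F 0 Tm \<theta>"
    and h: "martingale M F Tm h" "cadlag M Tm h"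
           "\<forall>t\<in>{0..Tm}. \<forall>\<omega>\<in>space M. h t \<omega> = stopped h \<theta> t \<omega>"
    and integr: "\<forall>X\<in>{Qc, Qv, K, Pc, Pv, q, p, h}. \<forall>\<sigma>. stopping_time_in M F 0 Tm \<sigma> \<longrightarrow>
                   integrable M (\<lambda>\<omega>. X (\<sigma> \<omega>) \<omega>)"
    and bad1: "\<forall>\<omega>\<in>space M. \<theta> \<omega> \<le> \<tau>s \<omega>"
    and bad2: "\<forall>t\<in>{0..Tm}. \<forall>\<omega>\<in>space M. t < \<tau>s \<omega> \<longrightarrow> p t \<omega> = Pv t \<omega>"
    and bad3: "\<forall>\<omega>\<in>space M. ind_before \<tau>s (\<theta> \<omega>) \<omega> * q (\<theta> \<omega>) \<omega> = 0"
  defines "Js \<equiv> ind_before \<tau>s"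
    and "Je \<equiv> ind_before \<theta>"
    and "PNL \<equiv> pnl Qc Qv q Pc Pv p \<tau>s \<theta> h"
    and "HVA \<equiv> (\<lambda>t \<omega>. - va M F Tm (pnl Qc Qv q Pc Pv p \<tau>s \<theta> h) t \<omega>)"
    and "D \<equiv> (\<lambda>t. real_cond_exp M (F t) (\<lambda>\<omega>. ind_before \<tau>s (\<theta> \<omega>) \<omega> * Qv (\<theta> \<omega>) \<omega>))"
    and "D' \<equiv> (\<lambda>t. real_cond_exp M (F t) (\<lambda>\<omega>. (1 - ind_before \<tau>s (\<theta> \<omega>) \<omega>) * Qv (\<theta> \<omega>) \<omega>))"
    and "VK \<equiv> va M F Tm (stopped K \<theta>)"
  shows
    "(\<forall>t\<in>{0..Tm}. \<forall>\<omega>\<in>space M. PNL t \<omega> =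
        from0 (stopped (\<lambda>s \<omega>. Qc s \<omega> + Js s \<omega> * q s \<omega> + (1 - Js s \<omega>) * Qv s \<omega>) \<theta>) t \<omega>
      - from0 (stopped (\<lambda>s \<omega>. Pc s \<omega> + Pv s \<omega>) \<theta>) t \<omega>
      - h t \<omega> - (1 - Je t \<omega>) * (1 - Js (\<theta> \<omega>) \<omega>) * Qv (\<theta> \<omega>) \<omega>)
   \<and> (\<forall>t\<in>{0..Tm}. AE \<omega> in M. HVA t \<omega> =
        stopped (\<lambda>s \<omega>. Js s \<omega> * (q s \<omega> - Qv s \<omega>)) \<theta> t \<omega> + D t \<omega> + Je t \<omega> * D' t \<omega> + VK t \<omega>)
   \<and> (\<forall>t\<in>{0..Tm}. AE \<omega> in M. VK t \<omega> =
        Qc (min t (\<theta> \<omega>)) \<omega> + Qv (min t (\<theta> \<omega>)) \<omega>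
        - real_cond_exp M (F t) (\<lambda>\<omega>. Qc (\<theta> \<omega>) \<omega> + Qv (\<theta> \<omega>) \<omega>) \<omega>)
   \<and> (AE \<omega> in M. HVA 0 \<omega> = q 0 \<omega> - real_cond_exp M (F 0) (\<lambda>\<omega>. Qc (\<theta> \<omega>) \<omega>) \<omega>)
   \<and> (\<forall>t\<in>{0..Tm}. AE \<omega> in M. - PNL t \<omega> + (HVA t \<omega> - HVA 0 \<omega>) =
        - from0 (stopped (\<lambda>s \<omega>. Qc s \<omega> + Qv s \<omega>) \<theta>) t \<omega>
        + from0 (stopped (\<lambda>s \<omega>. Pc s \<omega> + Pv s \<omega>) \<theta>) t \<omega>
        + h t \<omega> + (1 - Je t \<omega>) * (1 - Js (\<theta> \<omega>) \<omega>) * Qv (\<theta> \<omega>) \<omega>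
        + (D t \<omega> - D 0 \<omega>) + (Je t \<omega> * D' t \<omega> - Je 0 \<omega> * D' 0 \<omega>) + (VK t \<omega> - VK 0 \<omega>))"
  proof -
  interpret P: prob_space M by (rule prob)
  have filtr: "filtration (space M) F" and subs: "\<And>t. subalgebra M (F t)"
    using filt unfolding usual_filtration_def by auto
  interpret fs M F using prob filtr subs by (simp add: fs_def fs_axioms_def)
  have st: "stopping_time F \<theta>" and rng: "\<forall>\<omega>\<in>space M. 0 \<le> \<theta> \<omega> \<and> \<theta> \<omega> \<le> Tm"
    using \<theta> unfolding stopping_time_in_def by auto
  obtain \<omega>0 where "\<omega>0 \<in> space M" using P.not_empty by blast
  then have Tm: "0 < Tm" using \<tau>s(2) by fastforce
  have sets_sub: "\<And>t. sets (F t) \<subseteq> sets M" using subs by (auto simp: subalgebra_def)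
  have \<theta>M[measurable]: "\<theta> \<in> borel_measurable M" by (rule measurable_stopping_time[OF st sets_sub]) simp
  have \<tau>M[measurable]: "\<tau>s \<in> borel_measurable M" by (rule measurable_stopping_time[OF \<tau>s(1) sets_sub]) simp
  have part1: "PNL t \<omega> =
        from0 (stopped (\<lambda>s \<omega>. Qc s \<omega> + Js s \<omega> * q s \<omega> + (1 - Js s \<omega>) * Qv s \<omega>) \<theta>) t \<omega>
      - from0 (stopped (\<lambda>s \<omega>. Pc s \<omega> + Pv s \<omega>) \<theta>) t \<omega>
      - h t \<omega> - (1 - Je t \<omega>) * (1 - Js (\<theta> \<omega>) \<omega>) * Qv (\<theta> \<omega>) \<omega>"
    if t: "t \<in> {0..Tm}" and \<omega>: "\<omega> \<in> space M" for t \<omega>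
  proof -
    have pfix: "Pc u \<omega> + ind_before \<tau>s u \<omega> * p u \<omega> + (1 - ind_before \<tau>s u \<omega>) * Pv u \<omega> = Pc u \<omega> + Pv u \<omega>"
      if u: "u \<in> {0..Tm}" for u
      using bad2 u \<omega> by (cases "u < \<tau>s \<omega>") (auto simp: ind_before_def)
    have u1: "min t (\<theta> \<omega>) \<in> {0..Tm}" and u0: "min 0 (\<theta> \<omega>) \<in> {0..Tm}" using t rng \<omega> by auto
    have e3: "(1 - ind_before \<theta> t \<omega>) * (ind_before \<tau>s (\<theta> \<omega>) \<omega> * q (\<theta> \<omega>) \<omega> + (1 - ind_before \<tau>s (\<theta> \<omega>) \<omega>) * Qv (\<theta> \<omega>) \<omega>)
       = (1 - ind_before \<theta> t \<omega>) * (1 - ind_before \<tau>s (\<theta> \<omega>) \<omega>) * Qv (\<theta> \<omega>) \<omega>"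
      using bad3 \<omega> by simp
    show ?thesis
      unfolding PNL_def pnl_def from0_def stopped_def Js_def Je_def pfix[OF u1] pfix[OF u0] e3 by simp
  qed

  have Tm': "Tm \<in> {0..Tm}" using Tm by simp
  have sti_min: "stopping_time_in M F 0 Tm (\<lambda>\<omega>. min t (\<theta> \<omega>))" if "t \<in> {0..Tm}" for t
    using that st rng unfolding stopping_time_in_def by (auto intro: stopping_time_min stopping_time_const)
  have sti_c: "stopping_time_in M F 0 Tm (\<lambda>\<omega>. t)" if "t \<in> {0..Tm}" for t
    using that unfolding stopping_time_in_def by (auto intro: stopping_time_const)
  have iX: "integrable M (\<lambda>\<omega>. X (\<sigma> \<omega>) \<omega>)" if "X \<in> {Qc, Qv, K, Pc, Pv, q, p, h}" "stopping_time_in M F 0 Tm \<sigma>" for X \<sigma>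
    using integr that by blast
  have i\<theta>: "integrable M (\<lambda>\<omega>. X (\<theta> \<omega>) \<omega>)" if "X \<in> {Qc, Qv, K, Pc, Pv, q, p, h}" for X
    using iX[OF that \<theta>] .
  have imin: "integrable M (\<lambda>\<omega>. X (min t (\<theta> \<omega>)) \<omega>)" if "X \<in> {Qc, Qv, K, Pc, Pv, q, p, h}" "t \<in> {0..Tm}" for X t
    using iX[OF that(1) sti_min[OF that(2)]] .
  have ic: "integrable M (X t)" if "X \<in> {Qc, Qv, K, Pc, Pv, q, p, h}" "t \<in> {0..Tm}" for X t
    using iX[OF that(1) sti_c[OF that(2)]] by simp
  have qad: "adapted F Tm q" and qcad: "cadlag M Tm q" using q(1) unfolding semimartingale_def by auto
  have progX: "(\<lambda>\<omega>. X (min t (\<theta> \<omega>)) \<omega>) \<in> borel_measurable (F t)"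
    if "adapted F Tm X" "cadlag M Tm X" "t \<in> {0..Tm}" for X t
    using prog[OF Tm _ _ st rng that(3), of X] that(1,2) unfolding adapted_def cadlag_def by blast
  have adJ: "\<forall>s\<in>{0..Tm}. ind_before \<tau>s s \<in> borel_measurable (F s)"
  proof
    fix s :: real
    have [measurable]: "Measurable.pred (F s) (\<lambda>\<omega>. s < \<tau>s \<omega>)" by (rule stopping_timeD2[OF \<tau>s(1)])
    show "ind_before \<tau>s s \<in> borel_measurable (F s)" unfolding ind_before_def by measurable
  qed
  have rcJ: "\<forall>\<omega>\<in>space M. \<forall>s\<in>{0..<Tm}. ((\<lambda>u. ind_before \<tau>s u \<omega>) \<longlongrightarrow> ind_before \<tau>s s \<omega>) (at_right s)"
  proof (intro ballI)
    fix \<omega> s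
    have "eventually (\<lambda>u. ind_before \<tau>s u \<omega> = ind_before \<tau>s s \<omega>) (at_right s)"
    proof (cases "s < \<tau>s \<omega>")
      case True
      then show ?thesis unfolding eventually_at_right_field
        by (intro exI[of _ "\<tau>s \<omega>"]) (auto simp: ind_before_def)
    next
      case False
      then show ?thesis unfolding eventually_at_right_field
        by (intro exI[of _ "s + 1"]) (auto simp: ind_before_def)
    qed
    then show "((\<lambda>u. ind_before \<tau>s u \<omega>) \<longlongrightarrow> ind_before \<tau>s s \<omega>) (at_right s)" by (rule tendsto_eventually)
  qed
  have progJ: "(\<lambda>\<omega>. ind_before \<tau>s (min t (\<theta> \<omega>)) \<omega>) \<in> borel_measurable (F t)" if "t \<in> {0..Tm}" for t
    using prog[OF Tm adJ rcJ st rng that] .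
  have JeF: "(\<lambda>\<omega>. ind_before \<theta> t \<omega>) \<in> borel_measurable (F t)" for t
  proof -
    have [measurable]: "Measurable.pred (F t) (\<lambda>\<omega>. t < \<theta> \<omega>)" by (rule stopping_timeD2[OF st])
    show ?thesis unfolding ind_before_def by measurable
  qed
  have J\<theta>M[measurable]: "(\<lambda>\<omega>. ind_before \<tau>s (\<theta> \<omega>) \<omega>) \<in> borel_measurable M"
    unfolding ind_before_def by measurable
  have rcX: "\<forall>\<omega>\<in>space M. \<forall>s\<in>{0..<Tm}. ((\<lambda>u. X u \<omega>) \<longlongrightarrow> X s \<omega>) (at_right s)" if "cadlag M Tm X" for X
    using that unfolding cadlag_def by blast
  have adX: "\<forall>s\<in>{0..Tm}. X s \<in> borel_measurable (F s)" if "adapted F Tm X" for X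
    using that unfolding adapted_def by blast
  have mgR: "mgc Tm (\<lambda>t \<omega>. Qc t \<omega> + Qv t \<omega> + K t \<omega>) (\<lambda>\<omega>. Qc Tm \<omega> + Qv Tm \<omega> + K Tm \<omega>)"
    using mart_mgc[of Tm "\<lambda>t \<omega>. Qc t \<omega> + Qv t \<omega> + K t \<omega>"] K(3) Tm unfolding is_drift_def by simp
  have rcR: "\<forall>\<omega>\<in>space M. \<forall>s\<in>{0..<Tm}. ((\<lambda>u. Qc u \<omega> + Qv u \<omega> + K u \<omega>) \<longlongrightarrow> Qc s \<omega> + Qv s \<omega> + K s \<omega>) (at_right s)"
    using rcX[OF Qc(2)] rcX[OF Qv(2)] rcX[OF K(2)] by (intro ballI tendsto_add) auto
  have mgP: "mgc Tm (\<lambda>t \<omega>. Pc t \<omega> + Pv t \<omega>) (Pc Tm)"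
    by (rule va_mgc[OF _ adX[OF Pc(1)] adX[OF Pv(1)] _ _ Pv(3)]) (use Tm ic in auto)
  have rcP: "\<forall>\<omega>\<in>space M. \<forall>s\<in>{0..<Tm}. ((\<lambda>u. Pc u \<omega> + Pv u \<omega>) \<longlongrightarrow> Pc s \<omega> + Pv s \<omega>) (at_right s)"
    using rcX[OF Pc(2)] rcX[OF Pv(2)] by (intro ballI tendsto_add) auto
  have ostR: "AE \<omega> in M. real_cond_exp M (F t) (\<lambda>\<omega>. Qc (\<theta> \<omega>) \<omega> + Qv (\<theta> \<omega>) \<omega> + K (\<theta> \<omega>) \<omega>) \<omega>
      = Qc (min t (\<theta> \<omega>)) \<omega> + Qv (min t (\<theta> \<omega>)) \<omega> + K (min t (\<theta> \<omega>)) \<omega>" if t: "t \<in> {0..Tm}" for t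
    using ost[OF mgR Tm rcR st rng _ _ t] i\<theta> imin[OF _ t] by simp
  have ostP: "AE \<omega> in M. real_cond_exp M (F t) (\<lambda>\<omega>. Pc (\<theta> \<omega>) \<omega> + Pv (\<theta> \<omega>) \<omega>) \<omega>
      = Pc (min t (\<theta> \<omega>)) \<omega> + Pv (min t (\<theta> \<omega>)) \<omega>" if t: "t \<in> {0..Tm}" for t
    using ost[OF mgP Tm rcP st rng _ _ t] i\<theta> imin[OF _ t] by simp
  have hT: "AE \<omega> in M. real_cond_exp M (F t) (h Tm) \<omega> = h t \<omega>" if t: "t \<in> {0..Tm}" for t
    using h(1) t unfolding martingale_def by auto
  have hF: "h t \<in> borel_measurable (F t)" if t: "t \<in> {0..Tm}" for t
    using h(1) t unfolding martingale_def adapted_def by auto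

  have p23: "(AE \<omega> in M. HVA t \<omega> =
        stopped (\<lambda>s \<omega>. Js s \<omega> * (q s \<omega> - Qv s \<omega>)) \<theta> t \<omega> + D t \<omega> + Je t \<omega> * D' t \<omega> + VK t \<omega>)
     \<and> (AE \<omega> in M. VK t \<omega> =
        Qc (min t (\<theta> \<omega>)) \<omega> + Qv (min t (\<theta> \<omega>)) \<omega>
        - real_cond_exp M (F t) (\<lambda>\<omega>. Qc (\<theta> \<omega>) \<omega> + Qv (\<theta> \<omega>) \<omega>) \<omega>)"
    if t: "t \<in> {0..Tm}" for t
  proof -
    interpret S: sigma_finite_subalgebra M "F t" by (rule sfs)
    have [measurable]: "(\<lambda>\<omega>. Qc (min t (\<theta> \<omega>)) \<omega>) \<in> borel_measurable (F t)"
      "(\<lambda>\<omega>. Qv (min t (\<theta> \<omega>)) \<omega>) \<in> borel_measurable (F t)"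
      "(\<lambda>\<omega>. K (min t (\<theta> \<omega>)) \<omega>) \<in> borel_measurable (F t)"
      "(\<lambda>\<omega>. Pc (min t (\<theta> \<omega>)) \<omega>) \<in> borel_measurable (F t)"
      "(\<lambda>\<omega>. Pv (min t (\<theta> \<omega>)) \<omega>) \<in> borel_measurable (F t)"
      "(\<lambda>\<omega>. q (min t (\<theta> \<omega>)) \<omega>) \<in> borel_measurable (F t)"
      "(\<lambda>\<omega>. ind_before \<tau>s (min t (\<theta> \<omega>)) \<omega>) \<in> borel_measurable (F t)"
      "(\<lambda>\<omega>. ind_before \<theta> t \<omega>) \<in> borel_measurable (F t)"
      "h t \<in> borel_measurable (F t)"
      using progX[OF Qc(1,2) t] progX[OF Qv(1,2) t] progX[OF K(1,2) t] progX[OF Pc(1,2) t]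
        progX[OF Pv(1,2) t] progX[OF qad qcad t] progJ[OF t] JeF hF[OF t] by auto
    have [measurable]: "(\<lambda>\<omega>. Qv (\<theta> \<omega>) \<omega>) \<in> borel_measurable M" using i\<theta>[of Qv] by auto
    have iQv\<theta>: "integrable M (\<lambda>\<omega>. Qv (\<theta> \<omega>) \<omega>)" using i\<theta>[of Qv] by simp
    have iJQ: "integrable M (\<lambda>\<omega>. ind_before \<tau>s (\<theta> \<omega>) \<omega> * Qv (\<theta> \<omega>) \<omega>)"
      by (rule ibnd[OF iQv\<theta>]) (auto simp: ind_before_def)
    have iJQ': "integrable M (\<lambda>\<omega>. (1 - ind_before \<tau>s (\<theta> \<omega>) \<omega>) * Qv (\<theta> \<omega>) \<omega>)"
      by (rule ibnd[OF iQv\<theta>]) (auto simp: ind_before_def)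
    have iK\<theta>: "integrable M (\<lambda>\<omega>. K (\<theta> \<omega>) \<omega>)" using i\<theta>[of K] by simp
    have c1: "ce M (F t) (\<lambda>\<omega>. Qc (\<theta> \<omega>) \<omega> + Qv (\<theta> \<omega>) \<omega> + K (\<theta> \<omega>) \<omega>)
        (\<lambda>\<omega>. Qc (min t (\<theta> \<omega>)) \<omega> + Qv (min t (\<theta> \<omega>)) \<omega> + K (min t (\<theta> \<omega>)) \<omega>)"
      unfolding ce_def using ostR[OF t] i\<theta> by simp
    have c2: "ce M (F t) (\<lambda>\<omega>. ind_before \<tau>s (\<theta> \<omega>) \<omega> * Qv (\<theta> \<omega>) \<omega>) (D t)"
      unfolding D_def by (rule S.ce_self[OF iJQ])
    have c3: "ce M (F t) (\<lambda>\<omega>. K (\<theta> \<omega>) \<omega>) (real_cond_exp M (F t) (\<lambda>\<omega>. K (\<theta> \<omega>) \<omega>))"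
      by (rule S.ce_self[OF iK\<theta>])
    have iXs: "integrable M (\<lambda>\<omega>. Qc (min t (\<theta> \<omega>)) \<omega> + ind_before \<tau>s (min t (\<theta> \<omega>)) \<omega> * q (min t (\<theta> \<omega>)) \<omega>
          + (1 - ind_before \<tau>s (min t (\<theta> \<omega>)) \<omega>) * Qv (min t (\<theta> \<omega>)) \<omega>)"
    proof (intro Bochner_Integration.integrable_add)
      show "integrable M (\<lambda>\<omega>. Qc (min t (\<theta> \<omega>)) \<omega>)" using imin[OF _ t, of Qc] by simp
      show "integrable M (\<lambda>\<omega>. ind_before \<tau>s (min t (\<theta> \<omega>)) \<omega> * q (min t (\<theta> \<omega>)) \<omega>)"
        by (rule ibnd) (use imin[OF _ t, of q] meas_M progJ[OF t] in \<open>auto simp: ind_before_def\<close>)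
      show "integrable M (\<lambda>\<omega>. (1 - ind_before \<tau>s (min t (\<theta> \<omega>)) \<omega>) * Qv (min t (\<theta> \<omega>)) \<omega>)"
        by (rule ibnd) (use imin[OF _ t, of Qv] meas_M progJ[OF t] in \<open>auto simp: ind_before_def\<close>)
    qed
    have c4: "ce M (F t) (\<lambda>\<omega>. Qc (min t (\<theta> \<omega>)) \<omega> + ind_before \<tau>s (min t (\<theta> \<omega>)) \<omega> * q (min t (\<theta> \<omega>)) \<omega>
          + (1 - ind_before \<tau>s (min t (\<theta> \<omega>)) \<omega>) * Qv (min t (\<theta> \<omega>)) \<omega>)
        (\<lambda>\<omega>. Qc (min t (\<theta> \<omega>)) \<omega> + ind_before \<tau>s (min t (\<theta> \<omega>)) \<omega> * q (min t (\<theta> \<omega>)) \<omega>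
          + (1 - ind_before \<tau>s (min t (\<theta> \<omega>)) \<omega>) * Qv (min t (\<theta> \<omega>)) \<omega>)"
      by (rule S.ce_meas[OF iXs]) measurable
    have c5: "ce M (F t) (\<lambda>\<omega>. Pc (\<theta> \<omega>) \<omega> + Pv (\<theta> \<omega>) \<omega>) (\<lambda>\<omega>. Pc (min t (\<theta> \<omega>)) \<omega> + Pv (min t (\<theta> \<omega>)) \<omega>)"
      unfolding ce_def using ostP[OF t] i\<theta> by simp
    have c6: "ce M (F t) (\<lambda>\<omega>. Pc (min t (\<theta> \<omega>)) \<omega> + Pv (min t (\<theta> \<omega>)) \<omega>) (\<lambda>\<omega>. Pc (min t (\<theta> \<omega>)) \<omega> + Pv (min t (\<theta> \<omega>)) \<omega>)"
      by (rule S.ce_meas) (use imin[OF _ t] in auto)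
    have c7: "ce M (F t) (h Tm) (h t)" unfolding ce_def using hT[OF t] ic[OF _ Tm', of h] by simp
    have c8: "ce M (F t) (h t) (h t)" by (rule S.ce_meas) (use ic[OF _ t, of h] in auto)
    have c9: "ce M (F t) (\<lambda>\<omega>. ind_before \<theta> t \<omega> * ((1 - ind_before \<tau>s (\<theta> \<omega>) \<omega>) * Qv (\<theta> \<omega>) \<omega>))
        (\<lambda>\<omega>. ind_before \<theta> t \<omega> * D' t \<omega>)"
      unfolding D'_def
    proof (rule S.ce_mult[OF S.ce_self[OF iJQ']])
      show "(\<lambda>\<omega>. ind_before \<theta> t \<omega>) \<in> borel_measurable (F t)" by measurable
      show "integrable M (\<lambda>\<omega>. ind_before \<theta> t \<omega> * ((1 - ind_before \<tau>s (\<theta> \<omega>) \<omega>) * Qv (\<theta> \<omega>) \<omega>))"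
        by (rule ibnd[OF iJQ']) (use meas_M[OF JeF] in \<open>auto simp: ind_before_def\<close>)
    qed

    let ?A = "\<lambda>\<omega>. (Qc (min t (\<theta> \<omega>)) \<omega> + Qv (min t (\<theta> \<omega>)) \<omega> + K (min t (\<theta> \<omega>)) \<omega>)
        - D t \<omega> - real_cond_exp M (F t) (\<lambda>\<omega>. K (\<theta> \<omega>) \<omega>) \<omega>
        - (Qc (min t (\<theta> \<omega>)) \<omega> + ind_before \<tau>s (min t (\<theta> \<omega>)) \<omega> * q (min t (\<theta> \<omega>)) \<omega>
          + (1 - ind_before \<tau>s (min t (\<theta> \<omega>)) \<omega>) * Qv (min t (\<theta> \<omega>)) \<omega>)
        - (Pc (min t (\<theta> \<omega>)) \<omega> + Pv (min t (\<theta> \<omega>)) \<omega>) + (Pc (min t (\<theta> \<omega>)) \<omega> + Pv (min t (\<theta> \<omega>)) \<omega>)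
        - h t \<omega> + h t \<omega> - ind_before \<theta> t \<omega> * D' t \<omega>"
    have call: "ce M (F t) (\<lambda>\<omega>. (Qc (\<theta> \<omega>) \<omega> + Qv (\<theta> \<omega>) \<omega> + K (\<theta> \<omega>) \<omega>)
        - ind_before \<tau>s (\<theta> \<omega>) \<omega> * Qv (\<theta> \<omega>) \<omega> - K (\<theta> \<omega>) \<omega>
        - (Qc (min t (\<theta> \<omega>)) \<omega> + ind_before \<tau>s (min t (\<theta> \<omega>)) \<omega> * q (min t (\<theta> \<omega>)) \<omega>
          + (1 - ind_before \<tau>s (min t (\<theta> \<omega>)) \<omega>) * Qv (min t (\<theta> \<omega>)) \<omega>)
        - (Pc (\<theta> \<omega>) \<omega> + Pv (\<theta> \<omega>) \<omega>) + (Pc (min t (\<theta> \<omega>)) \<omega> + Pv (min t (\<theta> \<omega>)) \<omega>)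
        - h Tm \<omega> + h t \<omega> - ind_before \<theta> t \<omega> * ((1 - ind_before \<tau>s (\<theta> \<omega>) \<omega>) * Qv (\<theta> \<omega>) \<omega>)) ?A"
      by (intro S.ce_add S.ce_diff c1 c2 c3 c4 c5 c6 c7 c8 c9)
    have cf: "ce M (F t) (\<lambda>\<omega>. PNL Tm \<omega> - PNL t \<omega>) ?A"
    proof (rule S.ce_cong[OF call])
      fix \<omega> assume \<omega>: "\<omega> \<in> space M"
      have mT: "min Tm (\<theta> \<omega>) = \<theta> \<omega>" using rng \<omega> by auto
      have jT: "ind_before \<theta> Tm \<omega> = 0" using rng \<omega> by (auto simp: ind_before_def)
      have b3: "ind_before \<tau>s (\<theta> \<omega>) \<omega> * q (\<theta> \<omega>) \<omega> = 0" using bad3 \<omega> by auto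
      have pT: "PNL Tm \<omega> = (Qc (\<theta> \<omega>) \<omega> + ind_before \<tau>s (\<theta> \<omega>) \<omega> * q (\<theta> \<omega>) \<omega> + (1 - ind_before \<tau>s (\<theta> \<omega>) \<omega>) * Qv (\<theta> \<omega>) \<omega>
          - (Qc (min 0 (\<theta> \<omega>)) \<omega> + ind_before \<tau>s (min 0 (\<theta> \<omega>)) \<omega> * q (min 0 (\<theta> \<omega>)) \<omega> + (1 - ind_before \<tau>s (min 0 (\<theta> \<omega>)) \<omega>) * Qv (min 0 (\<theta> \<omega>)) \<omega>))
          - (Pc (\<theta> \<omega>) \<omega> + Pv (\<theta> \<omega>) \<omega> - (Pc (min 0 (\<theta> \<omega>)) \<omega> + Pv (min 0 (\<theta> \<omega>)) \<omega>))
          - h Tm \<omega> - (1 - 0) * (1 - ind_before \<tau>s (\<theta> \<omega>) \<omega>) * Qv (\<theta> \<omega>) \<omega>"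
        using part1[OF Tm' \<omega>] unfolding from0_def stopped_def Js_def Je_def mT jT .
      have pt: "PNL t \<omega> = (Qc (min t (\<theta> \<omega>)) \<omega> + ind_before \<tau>s (min t (\<theta> \<omega>)) \<omega> * q (min t (\<theta> \<omega>)) \<omega> + (1 - ind_before \<tau>s (min t (\<theta> \<omega>)) \<omega>) * Qv (min t (\<theta> \<omega>)) \<omega>
          - (Qc (min 0 (\<theta> \<omega>)) \<omega> + ind_before \<tau>s (min 0 (\<theta> \<omega>)) \<omega> * q (min 0 (\<theta> \<omega>)) \<omega> + (1 - ind_before \<tau>s (min 0 (\<theta> \<omega>)) \<omega>) * Qv (min 0 (\<theta> \<omega>)) \<omega>))
          - (Pc (min t (\<theta> \<omega>)) \<omega> + Pv (min t (\<theta> \<omega>)) \<omega> - (Pc (min 0 (\<theta> \<omega>)) \<omega> + Pv (min 0 (\<theta> \<omega>)) \<omega>))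
          - h t \<omega> - (1 - ind_before \<theta> t \<omega>) * (1 - ind_before \<tau>s (\<theta> \<omega>) \<omega>) * Qv (\<theta> \<omega>) \<omega>"
        using part1[OF t \<omega>] unfolding from0_def stopped_def Js_def Je_def .
      show "PNL Tm \<omega> - PNL t \<omega> = (Qc (\<theta> \<omega>) \<omega> + Qv (\<theta> \<omega>) \<omega> + K (\<theta> \<omega>) \<omega>)
        - ind_before \<tau>s (\<theta> \<omega>) \<omega> * Qv (\<theta> \<omega>) \<omega> - K (\<theta> \<omega>) \<omega>
        - (Qc (min t (\<theta> \<omega>)) \<omega> + ind_before \<tau>s (min t (\<theta> \<omega>)) \<omega> * q (min t (\<theta> \<omega>)) \<omega>
          + (1 - ind_before \<tau>s (min t (\<theta> \<omega>)) \<omega>) * Qv (min t (\<theta> \<omega>)) \<omega>)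
        - (Pc (\<theta> \<omega>) \<omega> + Pv (\<theta> \<omega>) \<omega>) + (Pc (min t (\<theta> \<omega>)) \<omega> + Pv (min t (\<theta> \<omega>)) \<omega>)
        - h Tm \<omega> + h t \<omega> - ind_before \<theta> t \<omega> * ((1 - ind_before \<tau>s (\<theta> \<omega>) \<omega>) * Qv (\<theta> \<omega>) \<omega>)"
        unfolding pT pt using b3 by algebra
    qed
    have cKs: "ce M (F t) (\<lambda>\<omega>. K (min t (\<theta> \<omega>)) \<omega>) (\<lambda>\<omega>. K (min t (\<theta> \<omega>)) \<omega>)"
      by (rule S.ce_meas) (use imin[OF _ t] in auto)
    have cVK: "ce M (F t) (\<lambda>\<omega>. stopped K \<theta> Tm \<omega> - stopped K \<theta> t \<omega>)
        (\<lambda>\<omega>. real_cond_exp M (F t) (\<lambda>\<omega>. K (\<theta> \<omega>) \<omega>) \<omega> - K (min t (\<theta> \<omega>)) \<omega>)"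
    proof (rule S.ce_cong[OF S.ce_diff[OF c3 cKs]])
      fix \<omega> assume \<omega>: "\<omega> \<in> space M"
      have mT: "min Tm (\<theta> \<omega>) = \<theta> \<omega>" using rng \<omega> by auto
      show "stopped K \<theta> Tm \<omega> - stopped K \<theta> t \<omega> = K (\<theta> \<omega>) \<omega> - K (min t (\<theta> \<omega>)) \<omega>"
        unfolding stopped_def mT ..
    qed
    have cQQ: "ce M (F t) (\<lambda>\<omega>. Qc (\<theta> \<omega>) \<omega> + Qv (\<theta> \<omega>) \<omega>)
        (\<lambda>\<omega>. (Qc (min t (\<theta> \<omega>)) \<omega> + Qv (min t (\<theta> \<omega>)) \<omega> + K (min t (\<theta> \<omega>)) \<omega>) - real_cond_exp M (F t) (\<lambda>\<omega>. K (\<theta> \<omega>) \<omega>) \<omega>)"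
      by (rule S.ce_cong[OF S.ce_diff[OF c1 c3]]) simp
    have aeF: "AE \<omega> in M. real_cond_exp M (F t) (\<lambda>\<omega>. PNL Tm \<omega> - PNL t \<omega>) \<omega> = ?A \<omega>" by (rule S.ce_AE[OF cf])
    have aeVK: "AE \<omega> in M. VK t \<omega> = real_cond_exp M (F t) (\<lambda>\<omega>. K (\<theta> \<omega>) \<omega>) \<omega> - K (min t (\<theta> \<omega>)) \<omega>"
      using S.ce_AE[OF cVK] unfolding VK_def va_def by simp
    have aeQQ: "AE \<omega> in M. real_cond_exp M (F t) (\<lambda>\<omega>. Qc (\<theta> \<omega>) \<omega> + Qv (\<theta> \<omega>) \<omega>) \<omega> =
        (Qc (min t (\<theta> \<omega>)) \<omega> + Qv (min t (\<theta> \<omega>)) \<omega> + K (min t (\<theta> \<omega>)) \<omega>) - real_cond_exp M (F t) (\<lambda>\<omega>. K (\<theta> \<omega>) \<omega>) \<omega>"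
      by (rule S.ce_AE[OF cQQ])
    have r1: "AE \<omega> in M. HVA t \<omega> =
        stopped (\<lambda>s \<omega>. Js s \<omega> * (q s \<omega> - Qv s \<omega>)) \<theta> t \<omega> + D t \<omega> + Je t \<omega> * D' t \<omega> + VK t \<omega>"
      using aeF aeVK
    proof eventually_elim
      case (elim \<omega>)
      have "HVA t \<omega> = - real_cond_exp M (F t) (\<lambda>\<omega>. PNL Tm \<omega> - PNL t \<omega>) \<omega>"
        unfolding HVA_def va_def PNL_def ..
      then show ?case unfolding elim(2) using elim(1) unfolding stopped_def Js_def Je_def
        by (simp add: algebra_simps)
    qed
    have r2: "AE \<omega> in M. VK t \<omega> =
        Qc (min t (\<theta> \<omega>)) \<omega> + Qv (min t (\<theta> \<omega>)) \<omega>
        - real_cond_exp M (F t) (\<lambda>\<omega>. Qc (\<theta> \<omega>) \<omega> + Qv (\<theta> \<omega>) \<omega>) \<omega>"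
      using aeVK aeQQ by eventually_elim simp
    show ?thesis using r1 r2 by blast
  qed
  have t0: "(0::real) \<in> {0..Tm}" using Tm by simp
  have iQv\<theta>: "integrable M (\<lambda>\<omega>. Qv (\<theta> \<omega>) \<omega>)" using i\<theta>[of Qv] by simp
  have iQc\<theta>: "integrable M (\<lambda>\<omega>. Qc (\<theta> \<omega>) \<omega>)" using i\<theta>[of Qc] by simp
  have [measurable]: "(\<lambda>\<omega>. Qv (\<theta> \<omega>) \<omega>) \<in> borel_measurable M" using iQv\<theta> by auto
  have iJQ: "integrable M (\<lambda>\<omega>. ind_before \<tau>s (\<theta> \<omega>) \<omega> * Qv (\<theta> \<omega>) \<omega>)"
    by (rule ibnd[OF iQv\<theta>]) (auto simp: ind_before_def)
  have iJQ': "integrable M (\<lambda>\<omega>. (1 - ind_before \<tau>s (\<theta> \<omega>) \<omega>) * Qv (\<theta> \<omega>) \<omega>)"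
    by (rule ibnd[OF iQv\<theta>]) (auto simp: ind_before_def)
  have hva0: "AE \<omega> in M. HVA 0 \<omega> = q 0 \<omega> - real_cond_exp M (F 0) (\<lambda>\<omega>. Qc (\<theta> \<omega>) \<omega>) \<omega>"
  proof -
    interpret S0: sigma_finite_subalgebra M "F 0" by (rule sfs)
    have cQv0: "ce M (F 0) (\<lambda>\<omega>. Qv (\<theta> \<omega>) \<omega>) (\<lambda>\<omega>. D 0 \<omega> + D' 0 \<omega>)"
      unfolding D_def D'_def
      by (rule S0.ce_cong[OF S0.ce_add[OF S0.ce_self[OF iJQ] S0.ce_self[OF iJQ']]]) (simp add: algebra_simps)
    have cQQ0: "ce M (F 0) (\<lambda>\<omega>. Qc (\<theta> \<omega>) \<omega> + Qv (\<theta> \<omega>) \<omega>)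
        (\<lambda>\<omega>. real_cond_exp M (F 0) (\<lambda>\<omega>. Qc (\<theta> \<omega>) \<omega>) \<omega> + (D 0 \<omega> + D' 0 \<omega>))"
      by (rule S0.ce_add[OF S0.ce_self[OF iQc\<theta>] cQv0])
    have aeQQ0: "AE \<omega> in M. real_cond_exp M (F 0) (\<lambda>\<omega>. Qc (\<theta> \<omega>) \<omega> + Qv (\<theta> \<omega>) \<omega>) \<omega>
        = real_cond_exp M (F 0) (\<lambda>\<omega>. Qc (\<theta> \<omega>) \<omega>) \<omega> + (D 0 \<omega> + D' 0 \<omega>)"
      by (rule S0.ce_AE[OF cQQ0])
    have Je0F: "(\<lambda>\<omega>. 1 - ind_before \<theta> 0 \<omega>) \<in> borel_measurable (F 0)"
      using JeF[of 0] by measurable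
    have iZ: "integrable M (\<lambda>\<omega>. (1 - ind_before \<theta> 0 \<omega>) * ((1 - ind_before \<tau>s (\<theta> \<omega>) \<omega>) * Qv (\<theta> \<omega>) \<omega>))"
      by (rule ibnd[OF iJQ']) (use meas_M[OF Je0F] in \<open>auto simp: ind_before_def\<close>)
    have cz1: "ce M (F 0) (\<lambda>\<omega>. (1 - ind_before \<theta> 0 \<omega>) * ((1 - ind_before \<tau>s (\<theta> \<omega>) \<omega>) * Qv (\<theta> \<omega>) \<omega>))
        (\<lambda>\<omega>. (1 - ind_before \<theta> 0 \<omega>) * D' 0 \<omega>)"
      unfolding D'_def by (rule S0.ce_mult[OF S0.ce_self[OF iJQ'] Je0F iZ])
    have cz2: "ce M (F 0) (\<lambda>\<omega>. (1 - ind_before \<theta> 0 \<omega>) * ((1 - ind_before \<tau>s (\<theta> \<omega>) \<omega>) * Qv (\<theta> \<omega>) \<omega>)) (\<lambda>\<omega>. 0)"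
    proof (rule S0.ce_cong[OF S0.ce_meas])
      show "integrable M (\<lambda>\<omega>. 0::real)" by simp
      show "(\<lambda>\<omega>. 0::real) \<in> borel_measurable (F 0)" by simp
      fix \<omega> assume \<omega>: "\<omega> \<in> space M"
      show "(1 - ind_before \<theta> 0 \<omega>) * ((1 - ind_before \<tau>s (\<theta> \<omega>) \<omega>) * Qv (\<theta> \<omega>) \<omega>) = 0"
      proof (cases "0 < \<theta> \<omega>")
        case True then show ?thesis by (simp add: ind_before_def)
      next
        case False
        then have "\<theta> \<omega> = 0" using rng \<omega> by force
        moreover have "0 < \<tau>s \<omega>" using \<tau>s(2) \<omega> by auto
        ultimately show ?thesis by (simp add: ind_before_def)
      qed
    qed
    have aeZ: "AE \<omega> in M. (1 - ind_before \<theta> 0 \<omega>) * D' 0 \<omega> = 0" by (rule S0.ce_unique[OF cz1 cz2])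
    from p23[OF t0] have a1: "AE \<omega> in M. HVA 0 \<omega> =
        stopped (\<lambda>s \<omega>. Js s \<omega> * (q s \<omega> - Qv s \<omega>)) \<theta> 0 \<omega> + D 0 \<omega> + Je 0 \<omega> * D' 0 \<omega> + VK 0 \<omega>"
      and a2: "AE \<omega> in M. VK 0 \<omega> = Qc (min 0 (\<theta> \<omega>)) \<omega> + Qv (min 0 (\<theta> \<omega>)) \<omega>
        - real_cond_exp M (F 0) (\<lambda>\<omega>. Qc (\<theta> \<omega>) \<omega> + Qv (\<theta> \<omega>) \<omega>) \<omega>" by auto
    show ?thesis using a1 a2 aeQQ0 aeZ AE_space
    proof eventually_elim
      case (elim \<omega>)
      have m0: "min 0 (\<theta> \<omega>) = 0" using rng elim(5) by auto
      have j0: "ind_before \<tau>s 0 \<omega> = 1" using \<tau>s(2) elim(5) by (auto simp: ind_before_def)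
      have q0: "Qc 0 \<omega> = 0" using Qc(3) elim(5) by auto
      have e1: "HVA 0 \<omega> = (q 0 \<omega> - Qv 0 \<omega>) + D 0 \<omega> + ind_before \<theta> 0 \<omega> * D' 0 \<omega> + VK 0 \<omega>"
        using elim(1) unfolding stopped_def Js_def Je_def m0 j0 by simp
      have e2: "VK 0 \<omega> = Qv 0 \<omega> - real_cond_exp M (F 0) (\<lambda>\<omega>. Qc (\<theta> \<omega>) \<omega> + Qv (\<theta> \<omega>) \<omega>) \<omega>"
        using elim(2) unfolding m0 q0 by simp
      show ?case using e1 e2 elim(3) elim(4) by algebra
    qed
  qed
  have part5: "AE \<omega> in M. - PNL t \<omega> + (HVA t \<omega> - HVA 0 \<omega>) =
        - from0 (stopped (\<lambda>s \<omega>. Qc s \<omega> + Qv s \<omega>) \<theta>) t \<omega>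
        + from0 (stopped (\<lambda>s \<omega>. Pc s \<omega> + Pv s \<omega>) \<theta>) t \<omega>
        + h t \<omega> + (1 - Je t \<omega>) * (1 - Js (\<theta> \<omega>) \<omega>) * Qv (\<theta> \<omega>) \<omega>
        + (D t \<omega> - D 0 \<omega>) + (Je t \<omega> * D' t \<omega> - Je 0 \<omega> * D' 0 \<omega>) + (VK t \<omega> - VK 0 \<omega>)"
    if t: "t \<in> {0..Tm}" for t
  proof -
    from p23[OF t] have a1: "AE \<omega> in M. HVA t \<omega> =
        stopped (\<lambda>s \<omega>. Js s \<omega> * (q s \<omega> - Qv s \<omega>)) \<theta> t \<omega> + D t \<omega> + Je t \<omega> * D' t \<omega> + VK t \<omega>" by auto
    from p23[OF t0] have a0: "AE \<omega> in M. HVA 0 \<omega> =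
        stopped (\<lambda>s \<omega>. Js s \<omega> * (q s \<omega> - Qv s \<omega>)) \<theta> 0 \<omega> + D 0 \<omega> + Je 0 \<omega> * D' 0 \<omega> + VK 0 \<omega>" by auto
    show ?thesis using a1 a0 AE_space
    proof eventually_elim
      case (elim \<omega>)
      have pt: "PNL t \<omega> =
        from0 (stopped (\<lambda>s \<omega>. Qc s \<omega> + Js s \<omega> * q s \<omega> + (1 - Js s \<omega>) * Qv s \<omega>) \<theta>) t \<omega>
      - from0 (stopped (\<lambda>s \<omega>. Pc s \<omega> + Pv s \<omega>) \<theta>) t \<omega>
      - h t \<omega> - (1 - Je t \<omega>) * (1 - Js (\<theta> \<omega>) \<omega>) * Qv (\<theta> \<omega>) \<omega>" by (rule part1[OF t elim(3)])
      show ?case using pt elim(1) elim(2) unfolding from0_def stopped_def by algebra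
    qed
  qed
  show ?thesis
  proof (intro conjI)
    show "\<forall>t\<in>{0..Tm}. \<forall>\<omega>\<in>space M. PNL t \<omega> =
        from0 (stopped (\<lambda>s \<omega>. Qc s \<omega> + Js s \<omega> * q s \<omega> + (1 - Js s \<omega>) * Qv s \<omega>) \<theta>) t \<omega>
      - from0 (stopped (\<lambda>s \<omega>. Pc s \<omega> + Pv s \<omega>) \<theta>) t \<omega>
      - h t \<omega> - (1 - Je t \<omega>) * (1 - Js (\<theta> \<omega>) \<omega>) * Qv (\<theta> \<omega>) \<omega>"
      using part1 by blast
    show "\<forall>t\<in>{0..Tm}. AE \<omega> in M. HVA t \<omega> =
        stopped (\<lambda>s \<omega>. Js s \<omega> * (q s \<omega> - Qv s \<omega>)) \<theta> t \<omega> + D t \<omega> + Je t \<omega> * D' t \<omega> + VK t \<omega>"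
      using p23 by blast
    show "\<forall>t\<in>{0..Tm}. AE \<omega> in M. VK t \<omega> =
        Qc (min t (\<theta> \<omega>)) \<omega> + Qv (min t (\<theta> \<omega>)) \<omega>
        - real_cond_exp M (F t) (\<lambda>\<omega>. Qc (\<theta> \<omega>) \<omega> + Qv (\<theta> \<omega>) \<omega>) \<omega>"
      using p23 by blast
    show "AE \<omega> in M. HVA 0 \<omega> = q 0 \<omega> - real_cond_exp M (F 0) (\<lambda>\<omega>. Qc (\<theta> \<omega>) \<omega>) \<omega>" by (rule hva0)
    show "\<forall>t\<in>{0..Tm}. AE \<omega> in M. - PNL t \<omega> + (HVA t \<omega> - HVA 0 \<omega>) =
        - from0 (stopped (\<lambda>s \<omega>. Qc s \<omega> + Qv s \<omega>) \<theta>) t \<omega>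
        + from0 (stopped (\<lambda>s \<omega>. Pc s \<omega> + Pv s \<omega>) \<theta>) t \<omega>
        + h t \<omega> + (1 - Je t \<omega>) * (1 - Js (\<theta> \<omega>) \<omega>) * Qv (\<theta> \<omega>) \<omega>
        + (D t \<omega> - D 0 \<omega>) + (Je t \<omega> * D' t \<omega> - Je 0 \<omega> * D' 0 \<omega>) + (VK t \<omega> - VK 0 \<omega>)"
      using part5 by blast
  qed
qed

end
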